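(* Let $\mathcal{H}$ be a Hilbert space, $K(\mathcal{H})$ the $C^*$-algebra of compact operators on $\mathcal{H}$, and $\mathcal{E}$ a Hilbert $K(\mathcal{H})$-module. Let $x, y \in \mathcal{E}$ be such that $\langle x, x\rangle$ is idempotent. Then the following are equivalent: (i) $x \parallel y$; (ii) there exists $\lambda\in\mathbb{T}$ such that $$x \perp_B \big(\|y\|\langle x,x\rangle x + \lambda \|x\|\langle y,x\rangle x\big) \quad\text{and}\quad y \perp_B \big(\|x\|\langle y,y\rangle y + \lambda\|y\|\langle y,x\rangle y\big).$$
   Context: A (left) Hilbert $K(\mathcal{H})$-module is a left $K(\mathcal{H})$-module $\mathcal{E}$ with a $K(\mathcal{H})$-valued inner product $\langle\cdot,\cdot\rangle$, linear in the first variable and conjugate linear in the second, satisfying $\langle x,x\rangle\ge 0$ with equality iff $x=0$, $\langle ax,y\rangle = a\langle x,y\rangle$ and $\langle x,y\rangle^*=\langle y,x\rangle$, and complete for the norm $\|x\|=\|\langle x,x\rangle\|^{1/2}$. $\mathbb{T}=\{\alpha\in\mathbb{C}:|\alpha|=1\}$. For elements $x,y$ of a normed space, $x\parallel y$ (norm-parallel) means $\|x+\lambda y\| = \|x\|+\|y\|$ for some $\lambda\in\mathbb{T}$, and $x\perp_B y$ (Birkhoff–James orthogonality) means $\|x\|\le\|x+\alpha y\|$ for all $\alpha\in\mathbb{C}$. *)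

theory Defs
  imports Complex_Main
begin

text \<open>A complex Hilbert space is modelled by a carrier type 'h (an additive group)
  together with an explicit complex scalar multiplication sm and inner product ip
  (linear in the first variable).\<close>

definition hnorm :: "('h \<Rightarrow> 'h \<Rightarrow> complex) \<Rightarrow> 'h \<Rightarrow> real" where
  "hnorm ip u = sqrt (Re (ip u u))"

definition hilbert_space ::
  "(complex \<Rightarrow> 'h::ab_group_add \<Rightarrow> 'h) \<Rightarrow> ('h \<Rightarrow> 'h \<Rightarrow> complex) \<Rightarrow> bool" where
  "hilbert_space sm ip \<longleftrightarrow>
     (\<forall>u. sm 1 u = u) \<and>
     (\<forall>a b u. sm a (sm b u) = sm (a * b) u) \<and>
     (\<forall>a u v. sm a (u + v) = sm a u + sm a v) \<and>
     (\<forall>a b u. sm (a + b) u = sm a u + sm b u) \<and>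
     (\<forall>u v w. ip (u + v) w = ip u w + ip v w) \<and>
     (\<forall>a u v. ip (sm a u) v = a * ip u v) \<and>
     (\<forall>u v. ip v u = cnj (ip u v)) \<and>
     (\<forall>u. Im (ip u u) = 0 \<and> Re (ip u u) \<ge> 0) \<and>
     (\<forall>u. ip u u = 0 \<longrightarrow> u = 0) \<and>
     (\<forall>X::nat \<Rightarrow> _. (\<forall>e>0. \<exists>N. \<forall>m\<ge>N. \<forall>n\<ge>N. hnorm ip (X m - X n) < e) \<longrightarrow>
          (\<exists>L. (\<lambda>n. hnorm ip (X n - L)) \<longlonglongrightarrow> 0))"

definition compact_op ::
  "(complex \<Rightarrow> 'h::ab_group_add \<Rightarrow> 'h) \<Rightarrow> ('h \<Rightarrow> 'h \<Rightarrow> complex) \<Rightarrow> ('h \<Rightarrow> 'h) \<Rightarrow> bool" where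
  "compact_op sm ip T \<longleftrightarrow>
     (\<forall>u v. T (u + v) = T u + T v) \<and>
     (\<forall>c u. T (sm c u) = sm c (T u)) \<and>
     (\<forall>(X::nat \<Rightarrow> 'h) B. (\<forall>n. hnorm ip (X n) \<le> B) \<longrightarrow>
        (\<exists>(r::nat \<Rightarrow> nat) L. strict_mono r \<and> (\<lambda>n. hnorm ip (T (X (r n)) - L)) \<longlonglongrightarrow> 0))"

definition op_norm :: "('h \<Rightarrow> 'h \<Rightarrow> complex) \<Rightarrow> ('h \<Rightarrow> 'h) \<Rightarrow> real" where
  "op_norm ip T = Sup {hnorm ip (T u) | u. hnorm ip u \<le> 1}"

definition mnorm :: "('h \<Rightarrow> 'h \<Rightarrow> complex) \<Rightarrow> ('e \<Rightarrow> 'e \<Rightarrow> ('h \<Rightarrow> 'h)) \<Rightarrow> 'e \<Rightarrow> real" where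
  "mnorm ip eip x = sqrt (op_norm ip (eip x x))"

definition hilbert_KH_module ::
  "(complex \<Rightarrow> 'h::ab_group_add \<Rightarrow> 'h) \<Rightarrow> ('h \<Rightarrow> 'h \<Rightarrow> complex) \<Rightarrow>
   (complex \<Rightarrow> 'e::ab_group_add \<Rightarrow> 'e) \<Rightarrow> (('h \<Rightarrow> 'h) \<Rightarrow> 'e \<Rightarrow> 'e) \<Rightarrow>
   ('e \<Rightarrow> 'e \<Rightarrow> ('h \<Rightarrow> 'h)) \<Rightarrow> bool" where
  "hilbert_KH_module sm ip esm act eip \<longleftrightarrow>
     hilbert_space sm ip \<and>
     \<comment> \<open>complex vector space\<close>
     (\<forall>x. esm 1 x = x) \<and>
     (\<forall>a b x. esm a (esm b x) = esm (a * b) x) \<and>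
     (\<forall>a x y. esm a (x + y) = esm a x + esm a y) \<and>
     (\<forall>a b x. esm (a + b) x = esm a x + esm b x) \<and>
     \<comment> \<open>left K(H)-module (compatible with scalars)\<close>
     (\<forall>a. compact_op sm ip a \<longrightarrow>
        (\<forall>x y. act a (x + y) = act a x + act a y) \<and>
        (\<forall>c x. act a (esm c x) = esm c (act a x)) \<and>
        (\<forall>c x. act (\<lambda>u. sm c (a u)) x = esm c (act a x))) \<and>
     (\<forall>a b x. compact_op sm ip a \<and> compact_op sm ip b \<longrightarrow>
        act (\<lambda>u. a u + b u) x = act a x + act b x \<and>
        act (a \<circ> b) x = act a (act b x)) \<and>
     \<comment> \<open>K(H)-valued inner product\<close>
     (\<forall>x y. compact_op sm ip (eip x y)) \<and>
     (\<forall>x y z. eip (x + y) z = (\<lambda>u. eip x z u + eip y z u)) \<and>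
     (\<forall>c x y. eip (esm c x) y = (\<lambda>u. sm c (eip x y u))) \<and>
     (\<forall>a x y. compact_op sm ip a \<longrightarrow> eip (act a x) y = a \<circ> eip x y) \<and>
     (\<forall>x y u v. ip (eip x y u) v = ip u (eip y x v)) \<and>
     (\<forall>x u. Im (ip (eip x x u) u) = 0 \<and> Re (ip (eip x x u) u) \<ge> 0) \<and>
     (\<forall>x. eip x x = (\<lambda>u. 0) \<longleftrightarrow> x = 0) \<and>
     \<comment> \<open>completeness\<close>
     (\<forall>X::nat \<Rightarrow> _. (\<forall>e>0. \<exists>N. \<forall>m\<ge>N. \<forall>n\<ge>N. mnorm ip eip (X m - X n) < e) \<longrightarrow>
          (\<exists>L. (\<lambda>n. mnorm ip eip (X n - L)) \<longlonglongrightarrow> 0))"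

definition norm_parallel :: "('e::plus \<Rightarrow> real) \<Rightarrow> (complex \<Rightarrow> 'e \<Rightarrow> 'e) \<Rightarrow> 'e \<Rightarrow> 'e \<Rightarrow> bool" where
  "norm_parallel N sc x y \<longleftrightarrow> (\<exists>l. cmod l = 1 \<and> N (x + sc l y) = N x + N y)"

definition bj_orth :: "('e::plus \<Rightarrow> real) \<Rightarrow> (complex \<Rightarrow> 'e \<Rightarrow> 'e) \<Rightarrow> 'e \<Rightarrow> 'e \<Rightarrow> bool" where
  "bj_orth N sc x y \<longleftrightarrow> (\<forall>a. N x \<le> N (x + sc a y))"

end

theory Submission imports Defs begin

lemma cmod_ofreal_sq[simp]: "cmod ((complex_of_real M)^2) = M^2"
  by (simp add: norm_power)

lemma mcnj1: "z * cnj z = (complex_of_real (cmod z))^2"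
  using complex_norm_square[of z] by simp

lemma mcnj2: "cnj z * z = (complex_of_real (cmod z))^2"
  using mcnj1[of z] by (simp add: mult.commute)

locale sform =
  fixes sc :: "complex \<Rightarrow> 'a::ab_group_add \<Rightarrow> 'a" and f :: "'a \<Rightarrow> 'a \<Rightarrow> complex"
  assumes f_add: "f (u + v) w = f u w + f v w"
    and f_sc: "f (sc a u) v = a * f u v"
    and f_sym: "f v u = cnj (f u v)"
    and f_im: "Im (f u u) = 0"
    and f_re: "Re (f u u) \<ge> 0"
begin

lemma f_add2: "f w (u + v) = f w u + f w v"
  by (metis f_add f_sym complex_cnj_add)

lemma f_sc2: "f u (sc a v) = cnj a * f u v"
  by (metis f_sc f_sym complex_cnj_mult)

lemma f_zero1[simp]: "f 0 v = 0"
  using f_add[of 0 0 v] by simp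

lemma f_zero2[simp]: "f v 0 = 0"
  using f_add2[of v 0 0] by simp

lemma f_minus1: "f (- u) v = - f u v"
proof -
  have "f u v + f (- u) v = 0" using f_add[of u "-u" v] by simp
  then show ?thesis by (simp add: eq_neg_iff_add_eq_0 add.commute)
qed

lemma f_minus2: "f v (- u) = - f v u"
proof -
  have "f v u + f v (- u) = 0" using f_add2[of v u "-u"] by simp
  then show ?thesis by (simp add: eq_neg_iff_add_eq_0 add.commute)
qed

lemma f_diff1: "f (u - w) v = f u v - f w v"
  using f_add[of u "-w" v] f_minus1[of w v] by simp

lemma f_diff2: "f v (u - w) = f v u - f v w"
  using f_add2[of v u "-w"] f_minus2[of v w] by simp

lemma f_real: "f u u = complex_of_real (Re (f u u))"
  using f_im[of u] by (simp add: complex_eq_iff)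

definition nn where "nn u = sqrt (Re (f u u))"

lemma nn_nonneg: "nn u \<ge> 0" unfolding nn_def using f_re[of u] by simp

lemma nn_sq: "(nn u)^2 = Re (f u u)"
proof -
  have "Re (f u u) \<ge> 0" by (rule f_re)
  then show ?thesis unfolding nn_def by simp
qed

lemma f_expand: "Re (f (u + v) (u + v)) = Re (f u u) + 2 * Re (f u v) + Re (f v v)"
proof -
  have "f (u + v) (u + v) = f u u + f u v + f v u + f v v"
    by (simp add: f_add f_add2)
  moreover have "Re (f v u) = Re (f u v)" using f_sym[of v u] by simp
  ultimately show ?thesis by simp
qed

lemma f_expand_sc: "Re (f (u + sc a v) (u + sc a v)) = Re (f u u) + 2 * Re (cnj a * f u v) + (cmod a)^2 * Re (f v v)"
proof -
  have "Re (f (sc a v) (sc a v)) = (cmod a)^2 * Re (f v v)"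
  proof -
    have "f (sc a v) (sc a v) = (a * cnj a) * f v v" by (simp add: f_sc f_sc2)
    also have "a * cnj a = complex_of_real ((cmod a)^2)" by (simp add: mcnj1 mcnj2)
    finally show ?thesis by simp
  qed
  then show ?thesis using f_expand[of u "sc a v"] by (simp add: f_sc2)
qed

lemma nn_sc: "nn (sc a u) = cmod a * nn u"
proof -
  have "f (sc a u) (sc a u) = complex_of_real ((cmod a)^2) * f u u"
    by (simp add: f_sc f_sc2 mcnj1 mcnj2 mult.assoc[symmetric])
  then have "Re (f (sc a u) (sc a u)) = (cmod a)^2 * Re (f u u)" by simp
  then show ?thesis unfolding nn_def by (simp add: real_sqrt_mult)
qed

lemma cs_sq: "(cmod (f u v))^2 \<le> Re (f u u) * Re (f v v)"
proof (cases "f u v = 0")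
  case True then show ?thesis using f_re[of u] f_re[of v] by simp
next
  case False
  define B where "B = cmod (f u v)"
  have Bpos: "B > 0" using False B_def by simp
  define A where "A = Re (f u u)"
  define C where "C = Re (f v v)"
  have key: "0 \<le> A - 2 * t * B + t^2 * C" for t :: real
  proof -
    define a where "a = - complex_of_real (t / B) * f u v"
    have "cnj a * f u v = - complex_of_real (t / B) * (cnj (f u v) * f u v)"
      by (simp add: a_def)
    also have "cnj (f u v) * f u v = complex_of_real (B^2)"
      by (simp add: B_def mcnj1 mcnj2 mult.commute)
    finally have e1: "Re (cnj a * f u v) = - t * B"
      using Bpos by (simp add: power2_eq_square)
    have "cmod a = \<bar>t\<bar>"
      using Bpos by (simp add: a_def norm_mult norm_divide B_def)
    then have e2: "(cmod a)^2 = t^2" by simp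
    show ?thesis using f_re[of "u + sc a v"] f_expand_sc[of u a v] e1 e2
      unfolding A_def C_def by simp
  qed
  have C0: "C \<ge> 0" using f_re C_def by simp
  show ?thesis
  proof (cases "C = 0")
    case True
    have "0 \<le> A - 2 * ((A + 1) / (2 * B)) * B" using key[of "(A + 1)/(2*B)"] True by simp
    then show ?thesis using Bpos by (simp add: field_simps)
  next
    case False
    then have Cp: "C > 0" using C0 by simp
    have "0 \<le> A - 2 * (B / C) * B + (B / C)^2 * C" using key[of "B/C"] .
    then have "0 \<le> A * C - B^2" using Cp
      by (simp add: field_simps power2_eq_square)
    then show ?thesis unfolding A_def C_def B_def by simp
  qed
qed

lemma cs: "cmod (f u v) \<le> nn u * nn v"
proof -
  have "(cmod (f u v))^2 \<le> (nn u * nn v)^2"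
    using cs_sq[of u v] by (simp add: power_mult_distrib nn_sq)
  then show ?thesis using nn_nonneg[of u] nn_nonneg[of v]
    by (meson mult_nonneg_nonneg power2_le_imp_le)
qed

lemma nn_triangle: "nn (u + v) \<le> nn u + nn v"
proof -
  have "Re (f u v) \<le> nn u * nn v" using cs[of u v] complex_Re_le_cmod order_trans by blast
  then have "(nn (u + v))^2 \<le> (nn u + nn v)^2"
    by (simp add: nn_sq f_expand power2_sum)
  then show ?thesis using nn_nonneg
    by (meson add_nonneg_nonneg power2_le_imp_le)
qed

end


context sform begin
lemma f_expand_diff: "Re (f (u - v) (u - v)) = Re (f u u) - 2 * Re (f u v) + Re (f v v)"
proof -
  have "f (u - v) (u - v) = f u u - f u v - f v u + f v v"
    by (simp add: f_diff1 f_diff2)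
  moreover have "Re (f v u) = Re (f u v)" using f_sym[of v u] by simp
  ultimately show ?thesis by simp
qed
end

lemma lim0_le:
  fixes g :: "nat \<Rightarrow> real"
  assumes "g \<longlonglongrightarrow> 0" "\<And>n. c \<le> g n" shows "c \<le> 0"
  using LIMSEQ_le_const[OF assms(1)] assms(2) by blast

lemma einv_lim: "(\<lambda>n. inverse (real (Suc n))) \<longlonglongrightarrow> 0"
  by (rule LIMSEQ_inverse_real_of_nat)

locale hs =
  fixes sm :: "complex \<Rightarrow> 'h::ab_group_add \<Rightarrow> 'h" and ip :: "'h \<Rightarrow> 'h \<Rightarrow> complex"
  assumes H: "hilbert_space sm ip"

context hs
begin
lemmas Hc = H[unfolded hilbert_space_def]
lemma Hax1: "\<forall>u. sm 1 u = u"
  using Hc by (rule conjunct1)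
lemma Hax2: "\<forall>a b u. sm a (sm b u) = sm (a * b) u"
  using Hc[THEN conjunct2] by (rule conjunct1)
lemma Hax3: "\<forall>a u v. sm a (u + v) = sm a u + sm a v"
  using Hc[THEN conjunct2, THEN conjunct2] by (rule conjunct1)
lemma Hax4: "\<forall>a b u. sm (a + b) u = sm a u + sm b u"
  using Hc[THEN conjunct2, THEN conjunct2, THEN conjunct2] by (rule conjunct1)
lemma Hax5: "\<forall>u v w. ip (u + v) w = ip u w + ip v w"
  using Hc[THEN conjunct2, THEN conjunct2, THEN conjunct2, THEN conjunct2] by (rule conjunct1)
lemma Hax6: "\<forall>a u v. ip (sm a u) v = a * ip u v"
  using Hc[THEN conjunct2, THEN conjunct2, THEN conjunct2, THEN conjunct2, THEN conjunct2] by (rule conjunct1)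
lemma Hax7: "\<forall>u v. ip v u = cnj (ip u v)"
  using Hc[THEN conjunct2, THEN conjunct2, THEN conjunct2, THEN conjunct2, THEN conjunct2, THEN conjunct2] by (rule conjunct1)
lemma Hax8: "\<forall>u. Im (ip u u) = 0 \<and> Re (ip u u) \<ge> 0"
  using Hc[THEN conjunct2, THEN conjunct2, THEN conjunct2, THEN conjunct2, THEN conjunct2, THEN conjunct2, THEN conjunct2] by (rule conjunct1)
lemma Hax9: "\<forall>u. ip u u = 0 \<longrightarrow> u = 0"
  using Hc[THEN conjunct2, THEN conjunct2, THEN conjunct2, THEN conjunct2, THEN conjunct2, THEN conjunct2, THEN conjunct2, THEN conjunct2] by (rule conjunct1)
lemmas Hax = Hax1 Hax2 Hax3 Hax4 Hax5 Hax6 Hax7 Hax8 Hax9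
end

sublocale hs \<subseteq> sform sm ip
proof
  fix u v w a
  show "ip (u + v) w = ip u w + ip v w" using Hax(5) by blast
  show "ip (sm a u) v = a * ip u v" using Hax(6) by blast
  show "ip v u = cnj (ip u v)" using Hax(7) by blast
  show "Im (ip u u) = 0" using Hax(8) by blast
  show "Re (ip u u) \<ge> 0" using Hax(8) by blast
qed

context hs
begin

lemma sm_one[simp]: "sm 1 u = u" using Hax by blast
lemma sm_assoc: "sm a (sm b u) = sm (a * b) u" using Hax by blast
lemma sm_add1: "sm a (u + v) = sm a u + sm a v" using Hax by blast
lemma sm_add2: "sm (a + b) u = sm a u + sm b u" using Hax by blast
lemma ip_def0: "ip u u = 0 \<Longrightarrow> u = 0" using Hax by blast

lemma sm_zero1[simp]: "sm 0 u = 0"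
  using sm_add2[of 0 0 u] by simp
lemma sm_zero2[simp]: "sm a 0 = 0"
  using sm_add1[of a 0 0] by simp
lemma sm_minus2: "sm a (- u) = - sm a u"
proof -
  have "sm a u + sm a (- u) = 0" using sm_add1[of a u "-u"] by simp
  then show ?thesis by (simp add: eq_neg_iff_add_eq_0 add.commute)
qed
lemma sm_diff2: "sm a (u - v) = sm a u - sm a v"
  using sm_add1[of a u "-v"] sm_minus2[of a v] by simp
lemma sm_minus1: "sm (- a) u = - sm a u"
proof -
  have "sm a u + sm (- a) u = 0" using sm_add2[of a "-a" u] by simp
  then show ?thesis by (simp add: eq_neg_iff_add_eq_0 add.commute)
qed
lemma sm_diff1: "sm (a - b) u = sm a u - sm b u"
  using sm_add2[of a "-b" u] sm_minus1[of b u] by simp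

lemma hnorm_eq[simp]: "hnorm ip = nn"
  by (rule ext) (simp add: hnorm_def nn_def)

lemma nn_zero[simp]: "nn 0 = 0" by (simp add: nn_def)

lemma nn_eq0: "nn u = 0 \<longleftrightarrow> u = 0"
proof
  assume "nn u = 0"
  then have "Re (ip u u) = 0" using f_re[of u] by (simp add: nn_def)
  then have "ip u u = 0" using f_real[of u] by simp
  then show "u = 0" by (rule ip_def0)
qed simp

lemma nn_minus: "nn (- u) = nn u"
  using nn_sc[of "-1" u] sm_minus1[of 1 u] by simp

lemma nn_commute: "nn (u - v) = nn (v - u)"
  using nn_minus[of "u - v"] by simp

lemma nn_tri_diff: "nn (u - w) \<le> nn (u - v) + nn (v - w)"
  using nn_triangle[of "u - v" "v - w"] by simp

lemma nn_tri_diff2: "nn u \<le> nn v + nn (u - v)"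
  using nn_triangle[of v "u - v"] by simp

lemma nn_rev_tri: "\<bar>nn u - nn v\<bar> \<le> nn (u - v)"
  using nn_tri_diff2[of u v] nn_tri_diff2[of v u] nn_commute[of u v] by linarith

lemma eq_if_nn0: "nn (u - v) = 0 \<Longrightarrow> u = v"
  using nn_eq0[of "u - v"] by simp

lemma ip_bound: "cmod (ip u v) \<le> nn u * nn v" by (rule cs)

lemma ip_uu: "ip u u = complex_of_real ((nn u)^2)"
  using f_real[of u] nn_sq[of u] by simp


lemma cop_add: "compact_op sm ip T \<Longrightarrow> T (u + v) = T u + T v"
  unfolding compact_op_def by blast
lemma cop_sm: "compact_op sm ip T \<Longrightarrow> T (sm c u) = sm c (T u)"
  unfolding compact_op_def by blast
lemma cop_zero: "compact_op sm ip T \<Longrightarrow> T 0 = 0"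
  using cop_add[of T 0 0] by simp
lemma cop_minus: "compact_op sm ip T \<Longrightarrow> T (- u) = - T u"
  using cop_add[of T u "-u"] cop_zero[of T] by (simp add: eq_neg_iff_add_eq_0 add.commute)
lemma cop_diff: "compact_op sm ip T \<Longrightarrow> T (u - v) = T u - T v"
  using cop_add[of T u "-v"] cop_minus[of T v] by simp

lemma cop_seq:
  fixes X :: "nat \<Rightarrow> 'h"
  assumes "compact_op sm ip T" "\<And>n. nn (X n) \<le> B"
  shows "\<exists>r L. strict_mono r \<and> (\<lambda>n. nn (T (X (r n)) - L)) \<longlonglongrightarrow> 0"
proof -
  have h: "\<forall>(X::nat \<Rightarrow> 'h) B. (\<forall>n. nn (X n) \<le> B) \<longrightarrow>
        (\<exists>(r::nat \<Rightarrow> nat) L. strict_mono r \<and> (\<lambda>n. nn (T (X (r n)) - L)) \<longlonglongrightarrow> 0)"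
    using assms(1) unfolding compact_op_def hnorm_eq by (elim conjE)
  have "\<forall>n. nn (X n) \<le> B" using assms(2) by blast
  then show ?thesis using h[rule_format, of X B] by blast
qed

lemma cop_bdd:
  assumes T: "compact_op sm ip T"
  shows "bdd_above {nn (T u) | u. nn u \<le> 1}"
proof (rule ccontr)
  assume nb: "\<not> ?thesis"
  have "\<forall>n::nat. \<exists>u. nn u \<le> 1 \<and> nn (T u) > real n"
  proof
    fix n :: nat
    from nb have "\<not> (\<forall>x\<in>{nn (T u) | u. nn u \<le> 1}. x \<le> real n)"
      unfolding bdd_above_def by blast
    then show "\<exists>u. nn u \<le> 1 \<and> nn (T u) > real n" by force
  qed
  then obtain U where U: "\<And>n. nn (U n) \<le> 1" "\<And>n. nn (T (U n)) > real n"
    by metis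
  obtain r L where r: "strict_mono r" and lim: "(\<lambda>n. nn (T (U (r n)) - L)) \<longlonglongrightarrow> 0"
  proof -
    have "\<exists>r L. strict_mono r \<and> (\<lambda>n. nn (T (U (r n)) - L)) \<longlonglongrightarrow> 0"
      by (rule cop_seq[OF T]) (rule U(1))
    then show ?thesis using that by blast
  qed
  have "\<forall>\<^sub>F n in sequentially. nn (T (U (r n)) - L) < 1"
    using order_tendstoD(2)[OF lim] by simp
  then obtain N where N: "\<And>n. n \<ge> N \<Longrightarrow> nn (T (U (r n)) - L) < 1"
    unfolding eventually_sequentially by blast
  define n where "n = N + nat \<lceil>nn L\<rceil> + 1"
  have "nn (T (U (r n))) \<le> nn L + nn (T (U (r n)) - L)" by (rule nn_tri_diff2)
  also have "\<dots> < nn L + 1" using N[of n] n_def by simp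
  finally have a: "nn (T (U (r n))) < nn L + 1" .
  have "real n \<le> real (r n)" using seq_suble[OF r, of n] by simp
  then have "real n < nn (T (U (r n)))" using U(2)[of "r n"] by linarith
  moreover have "nn L + 1 \<le> real n" unfolding n_def by linarith
  ultimately show False using a by linarith
qed

lemma op_norm_alt: "op_norm ip T = Sup {nn (T u) | u. nn u \<le> 1}"
  unfolding op_norm_def by simp

lemma op_norm_nonneg:
  assumes T: "compact_op sm ip T" shows "op_norm ip T \<ge> 0"
proof -
  have "nn (T 0) \<in> {nn (T u) | u. nn u \<le> 1}" by force
  then have "nn (T 0) \<le> op_norm ip T"
    unfolding op_norm_alt by (rule cSup_upper[OF _ cop_bdd[OF T]])
  then show ?thesis using cop_zero[OF T] by simp
qed

lemma op_bound1:
  assumes T: "compact_op sm ip T" and "nn u \<le> 1" shows "nn (T u) \<le> op_norm ip T"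
proof -
  have "nn (T u) \<in> {nn (T u) | u. nn u \<le> 1}" using assms(2) by force
  then show ?thesis unfolding op_norm_alt by (rule cSup_upper[OF _ cop_bdd[OF T]])
qed

lemma op_bound:
  assumes T: "compact_op sm ip T" shows "nn (T u) \<le> op_norm ip T * nn u"
proof (cases "u = 0")
  case True then show ?thesis using cop_zero[OF T] by simp
next
  case False
  then have p: "nn u > 0" using nn_eq0 nn_nonneg by (metis less_eq_real_def)
  define v where "v = sm (complex_of_real (1 / nn u)) u"
  have "nn v = 1" using p unfolding v_def nn_sc by (simp add: norm_divide)
  then have "nn (T v) \<le> op_norm ip T" by (intro op_bound1[OF T]) simp
  moreover have "nn (T v) = nn (T u) / nn u"
    unfolding v_def cop_sm[OF T] nn_sc using p by (simp add: norm_divide)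
  ultimately show ?thesis using p by (simp add: field_simps)
qed

lemma op_norm_le:
  assumes "\<And>u. nn u \<le> 1 \<Longrightarrow> nn (T u) \<le> c" shows "op_norm ip T \<le> c"
proof -
  have "nn (T 0) \<in> {nn (T u) | u. nn u \<le> 1}" by force
  then have "{nn (T u) | u. nn u \<le> 1} \<noteq> {}" by blast
  then show ?thesis unfolding op_norm_alt
    by (rule cSup_least) (use assms in auto)
qed

lemma op_norm_zero:
  assumes T: "compact_op sm ip T" and "op_norm ip T = 0" shows "T u = 0"
  using op_bound[OF T, of u] assms(2) nn_nonneg[of "T u"] nn_eq0[of "T u"] by simp

end


context hs begin

lemma attain:
  assumes T: "compact_op sm ip T" and sa: "\<And>u v. ip (T u) v = ip u (T v)"
    and pos: "\<And>u. Re (ip (T u) u) \<ge> 0" and Mp: "op_norm ip T > 0"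
  shows "\<exists>\<xi>. nn \<xi> = 1 \<and> Re (ip (T \<xi>) \<xi>) = op_norm ip T"
proof -
  define M where "M = op_norm ip T"
  have M0: "M > 0" using Mp M_def by simp
  have bnd: "\<And>u. nn (T u) \<le> M * nn u" unfolding M_def by (rule op_bound[OF T])
  define e :: "nat \<Rightarrow> real" where "e n = inverse (real (Suc n))" for n
  have e0: "e n > 0" for n unfolding e_def by simp
  have emono: "e (r n) \<le> e n" if "strict_mono r" for r n
    using seq_suble[OF that, of n] unfolding e_def by (simp add: field_simps)
  have elim: "e \<longlonglongrightarrow> 0" unfolding e_def by (rule einv_lim)
  have "\<forall>n. \<exists>u. nn u \<le> 1 \<and> nn (T u) > M - e n"
  proof
    fix n
    have "nn (T 0) \<in> {nn (T u) | u. nn u \<le> 1}" by force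
    then have ne: "{nn (T u) | u. nn u \<le> 1} \<noteq> {}" by blast
    have "M - e n < Sup {nn (T u) | u. nn u \<le> 1}" using e0[of n] M_def op_norm_alt by simp
    then show "\<exists>u. nn u \<le> 1 \<and> nn (T u) > M - e n"
      using less_cSup_iff[OF ne cop_bdd[OF T]] by blast
  qed
  then obtain U where U1: "\<And>n. nn (U n) \<le> 1" and U2: "\<And>n. nn (T (U n)) > M - e n"
    by metis
  obtain r L where r: "strict_mono r" and Dlim: "(\<lambda>n. nn (T (U (r n)) - L)) \<longlonglongrightarrow> 0"
  proof -
    have "\<exists>r L. strict_mono r \<and> (\<lambda>n. nn (T (U (r n)) - L)) \<longlonglongrightarrow> 0"
      by (rule cop_seq[OF T]) (rule U1)
    then show ?thesis using that by blast
  qed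
  define D where "D n = nn (T (U (r n)) - L)" for n
  have D0: "D n \<ge> 0" for n unfolding D_def by (rule nn_nonneg)
  have Dlim': "D \<longlonglongrightarrow> 0" using Dlim unfolding D_def by simp
  define c :: complex where "c = complex_of_real (M^2)"
  have est: "nn (sm c (U n) - T (T (U n))) \<le> sqrt (2 * M^3 * e n)" for n
  proof -
    let ?u = "U n"
    have tt: "ip (sm c ?u) (T (T ?u)) = c * complex_of_real ((nn (T ?u))^2)"
    proof -
      have "ip (sm c ?u) (T (T ?u)) = c * ip ?u (T (T ?u))" by (simp add: f_sc)
      also have "ip ?u (T (T ?u)) = ip (T ?u) (T ?u)" by (simp add: sa)
      finally show ?thesis by (simp add: ip_uu)
    qed
    have aa: "Re (ip (sm c ?u) (sm c ?u)) = M^4 * (nn ?u)^2"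
    proof -
      have cm: "cmod c = M^2" unfolding c_def by (simp only: norm_of_real) simp
      have "Re (ip (sm c ?u) (sm c ?u)) = (nn (sm c ?u))^2" by (simp add: nn_sq)
      also have "\<dots> = (M^2 * nn ?u)^2" by (simp add: nn_sc cm)
      finally show ?thesis by (simp add: power_mult_distrib)
    qed
    have bb: "Re (ip (T (T ?u)) (T (T ?u))) \<le> M^2 * (nn (T ?u))^2"
    proof -
      have "nn (T (T ?u)) \<le> M * nn (T ?u)" by (rule bnd)
      then have "(nn (T (T ?u)))^2 \<le> (M * nn (T ?u))^2"
        using nn_nonneg by (simp add: power_mono)
      then show ?thesis by (simp add: nn_sq power_mult_distrib)
    qed
    have "(nn (sm c ?u - T (T ?u)))^2 = Re (ip (sm c ?u) (sm c ?u)) - 2 * Re (ip (sm c ?u) (T (T ?u))) + Re (ip (T (T ?u)) (T (T ?u)))"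
      by (simp add: nn_sq f_expand_diff)
    also have "\<dots> \<le> M^4 * (nn ?u)^2 - 2 * (M^2 * (nn (T ?u))^2) + M^2 * (nn (T ?u))^2"
      using aa bb tt c_def by simp
    also have "\<dots> \<le> M^4 - M^2 * (nn (T ?u))^2"
    proof -
      have "(nn ?u)^2 \<le> 1" using U1[of n] nn_nonneg[of ?u] by (simp add: power_le_one)
      then have "M^4 * (nn ?u)^2 \<le> M^4" using M0 by (simp add: mult_left_le)
      then show ?thesis by simp
    qed
    also have "\<dots> = M^2 * ((M - nn (T ?u)) * (M + nn (T ?u)))" by (simp add: algebra_simps power2_eq_square power4_eq_xxxx)
    also have "\<dots> \<le> M^2 * (e n * (2 * M))"
    proof -
      have x1: "nn (T ?u) \<le> M" using bnd[of ?u] U1[of n] M0 by (meson mult_left_le order_trans less_le nn_nonneg)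
      have x2: "M - nn (T ?u) \<le> e n" using U2[of n] by simp
      have x3: "0 \<le> M - nn (T ?u)" using x1 by simp
      have "(M - nn (T ?u)) * (M + nn (T ?u)) \<le> e n * (2 * M)"
        using x1 x2 x3 nn_nonneg[of "T ?u"] e0[of n] by (intro mult_mono) auto
      then show ?thesis using M0 by simp
    qed
    also have "\<dots> = 2 * M^3 * e n" by (simp add: power2_eq_square power3_eq_cube)
    finally show ?thesis by (simp add: real_le_rsqrt)
  qed
  define \<xi> where "\<xi> = sm (complex_of_real (1 / M^2)) (T L)"
  define g where "g n = (sqrt (2 * M^3 * e n) + M * D n) / M^2" for n
  have glim: "g \<longlonglongrightarrow> 0"
  proof -
    have "(\<lambda>n. (sqrt (2 * M^3 * e n) + M * D n) / M^2) \<longlonglongrightarrow> (sqrt (2 * M^3 * 0) + M * 0) / M^2"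
      using M0 by (intro tendsto_intros elim Dlim') simp
    then show ?thesis unfolding g_def by simp
  qed
  have Uxi: "nn (U (r n) - \<xi>) \<le> g n" for n
  proof -
    have "nn (sm c (U (r n)) - T L) \<le> nn (sm c (U (r n)) - T (T (U (r n)))) + nn (T (T (U (r n))) - T L)"
      by (rule nn_tri_diff)
    also have "\<dots> \<le> sqrt (2 * M^3 * e n) + M * D n"
    proof -
      have "sqrt (2 * M^3 * e (r n)) \<le> sqrt (2 * M^3 * e n)"
        using emono[OF r, of n] M0 by simp
      moreover have "nn (T (T (U (r n))) - T L) \<le> M * D n"
        unfolding D_def using bnd[of "T (U (r n)) - L"] by (simp add: cop_diff[OF T])
      ultimately show ?thesis using est[of "r n"] by linarith
    qed
    finally have a: "nn (sm c (U (r n)) - T L) \<le> sqrt (2 * M^3 * e n) + M * D n" .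
    have "U (r n) - \<xi> = sm (complex_of_real (1 / M^2)) (sm c (U (r n)) - T L)"
      unfolding \<xi>_def c_def using M0 by (simp add: sm_diff2 sm_assoc)
    then have "nn (U (r n) - \<xi>) = nn (sm c (U (r n)) - T L) / M^2"
      using M0 by (simp add: nn_sc norm_divide)
    then show ?thesis using a M0 unfolding g_def by (simp add: divide_right_mono)
  qed
  have TxiL: "T \<xi> = L"
  proof -
    have "nn (T \<xi> - L) \<le> M * g n + D n" for n
    proof -
      have "nn (T \<xi> - L) \<le> nn (T \<xi> - T (U (r n))) + nn (T (U (r n)) - L)" by (rule nn_tri_diff)
      also have "nn (T \<xi> - T (U (r n))) \<le> M * nn (U (r n) - \<xi>)"
        using bnd[of "\<xi> - U (r n)"] by (simp add: cop_diff[OF T] nn_commute)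
      also have "\<dots> \<le> M * g n" using Uxi[of n] M0 by simp
      finally show ?thesis unfolding D_def by simp
    qed
    moreover have "(\<lambda>n. M * g n + D n) \<longlonglongrightarrow> M * 0 + 0" by (intro tendsto_intros glim Dlim')
    ultimately have "nn (T \<xi> - L) \<le> 0" using lim0_le[of "\<lambda>n. M * g n + D n"] by simp
    then show ?thesis using nn_nonneg[of "T \<xi> - L"] eq_if_nn0 by (simp add: antisym)
  qed
  have nL: "nn L = M"
  proof -
    have "\<bar>nn L - M\<bar> \<le> D n + e n" for n
    proof -
      have "\<bar>nn (T (U (r n))) - nn L\<bar> \<le> D n" unfolding D_def by (rule nn_rev_tri)
      moreover have "nn (T (U (r n))) \<le> M" using bnd[of "U (r n)"] U1[of "r n"] M0
        by (meson mult_left_le order_trans less_le nn_nonneg)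
      moreover have "M - e (r n) < nn (T (U (r n)))" by (rule U2)
      moreover have "e (r n) \<le> e n" by (rule emono[OF r])
      ultimately show ?thesis by linarith
    qed
    moreover have "(\<lambda>n. D n + e n) \<longlonglongrightarrow> 0 + 0" by (intro tendsto_intros elim Dlim')
    ultimately have "\<bar>nn L - M\<bar> \<le> 0" using lim0_le[of "\<lambda>n. D n + e n" "\<bar>nn L - M\<bar>"] by simp
    then show ?thesis by simp
  qed
  have nxi: "nn \<xi> = 1"
  proof -
    have "nn \<xi> - 1 \<le> g n" for n
    proof -
      have "nn \<xi> \<le> nn (U (r n)) + nn (\<xi> - U (r n))" by (rule nn_tri_diff2)
      then show ?thesis using U1[of "r n"] Uxi[of n] nn_commute[of "U (r n)" \<xi>] by linarith
    qed
    then have "nn \<xi> - 1 \<le> 0" using lim0_le[OF glim] by blast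
    moreover have "M \<le> M * nn \<xi>" using bnd[of \<xi>] TxiL nL by simp
    then have "1 \<le> nn \<xi>" using M0 by simp
    ultimately show ?thesis by simp
  qed
  have TT: "T (T \<xi>) = sm c \<xi>"
    unfolding TxiL unfolding \<xi>_def c_def using M0 by (simp add: sm_assoc)
  define q where "q = Re (ip (T \<xi>) \<xi>)"
  have qle: "q \<le> M"
  proof -
    have "q \<le> cmod (ip (T \<xi>) \<xi>)" unfolding q_def by (rule complex_Re_le_cmod)
    also have "\<dots> \<le> nn (T \<xi>) * nn \<xi>" by (rule ip_bound)
    finally show ?thesis using TxiL nL nxi by simp
  qed
  have qge: "q \<ge> M"
  proof -
    define v where "v = T \<xi> - sm (complex_of_real M) \<xi>"
    have Tv: "T v = sm c \<xi> - sm (complex_of_real M) (T \<xi>)"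
      unfolding v_def by (simp add: cop_diff[OF T] cop_sm[OF T] TT)
    have p: "Re (ip (T v) v) \<ge> 0" by (rule pos)
    have i1: "ip \<xi> \<xi> = 1" using ip_uu[of \<xi>] nxi by simp
    have i2: "ip (T \<xi>) (T \<xi>) = c" using sa[of \<xi> "T \<xi>"] TT i1 f_sc2 c_def by simp
    have i3: "Re (ip \<xi> (T \<xi>)) = q" unfolding q_def using f_sym[of \<xi> "T \<xi>"] by simp
    have "ip (T v) v = c * ip \<xi> (T \<xi>) - c * complex_of_real M * ip \<xi> \<xi>
        - complex_of_real M * ip (T \<xi>) (T \<xi>) + complex_of_real M * complex_of_real M * ip (T \<xi>) \<xi>"
      unfolding Tv unfolding v_def by (simp add: f_diff1 f_diff2 f_sc f_sc2 algebra_simps)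
    then have "Re (ip (T v) v) = M^2 * q - M^3 - M^3 + M^2 * q"
      using i1 i2 i3 c_def q_def by (simp add: power2_eq_square power3_eq_cube)
    then show ?thesis using p M0 by (smt (verit) mult_le_cancel_left_pos power2_eq_square power3_eq_cube mult.assoc mult_pos_pos)
  qed
  show ?thesis using nxi qle qge unfolding q_def M_def by (intro exI[of _ \<xi>]) simp
qed

end


locale hm =
  fixes sm :: "complex \<Rightarrow> 'h::ab_group_add \<Rightarrow> 'h" and ip :: "'h \<Rightarrow> 'h \<Rightarrow> complex"
    and esm :: "complex \<Rightarrow> 'e::ab_group_add \<Rightarrow> 'e" and act :: "('h \<Rightarrow> 'h) \<Rightarrow> 'e \<Rightarrow> 'e"
    and eip :: "'e \<Rightarrow> 'e \<Rightarrow> ('h \<Rightarrow> 'h)"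
  assumes M: "hilbert_KH_module sm ip esm act eip"
begin
lemmas Mc = M[unfolded hilbert_KH_module_def]
lemma Max1: "hilbert_space sm ip"
  using Mc by (rule conjunct1)
lemma Max2: "\<forall>x. esm 1 x = x"
  using Mc[THEN conjunct2] by (rule conjunct1)
lemma Max3: "\<forall>a b x. esm a (esm b x) = esm (a * b) x"
  using Mc[THEN conjunct2, THEN conjunct2] by (rule conjunct1)
lemma Max4: "\<forall>a x y. esm a (x + y) = esm a x + esm a y"
  using Mc[THEN conjunct2, THEN conjunct2, THEN conjunct2] by (rule conjunct1)
lemma Max5: "\<forall>a b x. esm (a + b) x = esm a x + esm b x"
  using Mc[THEN conjunct2, THEN conjunct2, THEN conjunct2, THEN conjunct2] by (rule conjunct1)
lemma Max8: "\<forall>x y. compact_op sm ip (eip x y)"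
  using Mc[THEN conjunct2, THEN conjunct2, THEN conjunct2, THEN conjunct2, THEN conjunct2, THEN conjunct2, THEN conjunct2] by (rule conjunct1)
lemma Max9: "\<forall>x y z. eip (x + y) z = (\<lambda>u. eip x z u + eip y z u)"
  using Mc[THEN conjunct2, THEN conjunct2, THEN conjunct2, THEN conjunct2, THEN conjunct2, THEN conjunct2, THEN conjunct2, THEN conjunct2] by (rule conjunct1)
lemma Max10: "\<forall>c x y. eip (esm c x) y = (\<lambda>u. sm c (eip x y u))"
  using Mc[THEN conjunct2, THEN conjunct2, THEN conjunct2, THEN conjunct2, THEN conjunct2, THEN conjunct2, THEN conjunct2, THEN conjunct2, THEN conjunct2] by (rule conjunct1)
lemma Max11: "\<forall>a x y. compact_op sm ip a \<longrightarrow> eip (act a x) y = a \<circ> eip x y"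
  using Mc[THEN conjunct2, THEN conjunct2, THEN conjunct2, THEN conjunct2, THEN conjunct2, THEN conjunct2, THEN conjunct2, THEN conjunct2, THEN conjunct2, THEN conjunct2] by (rule conjunct1)
lemma Max12: "\<forall>x y u v. ip (eip x y u) v = ip u (eip y x v)"
  using Mc[THEN conjunct2, THEN conjunct2, THEN conjunct2, THEN conjunct2, THEN conjunct2, THEN conjunct2, THEN conjunct2, THEN conjunct2, THEN conjunct2, THEN conjunct2, THEN conjunct2] by (rule conjunct1)
lemma Max13: "\<forall>x u. Im (ip (eip x x u) u) = 0 \<and> Re (ip (eip x x u) u) \<ge> 0"
  using Mc[THEN conjunct2, THEN conjunct2, THEN conjunct2, THEN conjunct2, THEN conjunct2, THEN conjunct2, THEN conjunct2, THEN conjunct2, THEN conjunct2, THEN conjunct2, THEN conjunct2, THEN conjunct2] by (rule conjunct1)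
lemma Max14: "\<forall>x. eip x x = (\<lambda>u. 0) \<longleftrightarrow> x = 0"
  using Mc[THEN conjunct2, THEN conjunct2, THEN conjunct2, THEN conjunct2, THEN conjunct2, THEN conjunct2, THEN conjunct2, THEN conjunct2, THEN conjunct2, THEN conjunct2, THEN conjunct2, THEN conjunct2, THEN conjunct2] by (rule conjunct1)
end

sublocale hm \<subseteq> hs sm ip
  by unfold_locales (rule Max1)

context hm begin

lemma esm_one[simp]: "esm 1 x = x" by (rule Max2[rule_format])
lemma esm_add2: "esm (a + b) x = esm a x + esm b x" by (rule Max5[rule_format])
lemma esm_zero1[simp]: "esm 0 x = 0" using esm_add2[of 0 0 x] by simp
lemma esm_add1: "esm a (x + y) = esm a x + esm a y" by (rule Max4[rule_format])
lemma esm_zero2[simp]: "esm a 0 = 0" using esm_add1[of a 0 0] by simp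
lemma eip_cop: "compact_op sm ip (eip x y)" by (rule Max8[rule_format])
lemma eip_add: "eip (x + y) z = (\<lambda>u. eip x z u + eip y z u)" by (rule Max9[rule_format])
lemma eip_esm: "eip (esm c x) y = (\<lambda>u. sm c (eip x y u))" by (rule Max10[rule_format])
lemma eip_act: "compact_op sm ip a \<Longrightarrow> eip (act a x) y = a \<circ> eip x y" by (rule Max11[rule_format])
lemma eip_adj: "ip (eip x y u) v = ip u (eip y x v)" by (rule Max12[rule_format])
lemma eip_im: "Im (ip (eip x x u) u) = 0" using Max13[rule_format, of x u] by (rule conjunct1)
lemma eip_re: "Re (ip (eip x x u) u) \<ge> 0" using Max13[rule_format, of x u] by (rule conjunct2)
lemma eip_iff: "eip x x = (\<lambda>u. 0) \<longleftrightarrow> x = 0" by (rule Max14[rule_format])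
lemma eip_def0: "eip x x = (\<lambda>u. 0) \<Longrightarrow> x = 0" using eip_iff by blast
lemma eip_00: "eip 0 0 = (\<lambda>u. 0)" using eip_iff[of 0] by simp

definition sip where "sip \<xi> z w = ip (eip z w \<xi>) \<xi>"

lemma sip_sform: "sform esm (sip \<xi>)"
proof
  fix u v w :: 'e and a
  show "sip \<xi> (u + v) w = sip \<xi> u w + sip \<xi> v w"
    unfolding sip_def eip_add by (simp add: f_add)
  show "sip \<xi> (esm a u) v = a * sip \<xi> u v"
    unfolding sip_def eip_esm by (simp add: f_sc)
  show "sip \<xi> v u = cnj (sip \<xi> u v)"
    unfolding sip_def eip_adj[of v u \<xi> \<xi>] by (rule f_sym)
  show "Im (sip \<xi> u u) = 0" unfolding sip_def by (rule eip_im)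
  show "0 \<le> Re (sip \<xi> u u)" unfolding sip_def by (rule eip_re)
qed

abbreviation "NN \<xi> \<equiv> sform.nn (sip \<xi>)"
abbreviation "N \<equiv> mnorm ip eip"

lemma N_def': "N z = sqrt (op_norm ip (eip z z))" by (simp add: mnorm_def)

lemma N_nonneg: "N z \<ge> 0"
  unfolding N_def' using op_norm_nonneg[OF eip_cop] by simp

lemma N_sq: "(N z)^2 = op_norm ip (eip z z)"
  unfolding N_def' using op_norm_nonneg[OF eip_cop] by simp

lemma sip_le: "Re (sip \<xi> z z) \<le> (N z)^2 * (nn \<xi>)^2"
proof -
  have "Re (sip \<xi> z z) \<le> cmod (ip (eip z z \<xi>) \<xi>)" unfolding sip_def by (rule complex_Re_le_cmod)
  also have "\<dots> \<le> nn (eip z z \<xi>) * nn \<xi>" by (rule ip_bound)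
  also have "\<dots> \<le> (op_norm ip (eip z z) * nn \<xi>) * nn \<xi>"
    using op_bound[OF eip_cop] nn_nonneg by (simp add: mult_right_mono)
  finally have "Re (sip \<xi> z z) \<le> op_norm ip (eip z z) * nn \<xi> * nn \<xi>" .
  then show ?thesis unfolding N_sq by (simp add: power2_eq_square mult.assoc)
qed

lemma NN_le: "nn \<xi> = 1 \<Longrightarrow> NN \<xi> z \<le> N z"
proof -
  assume "nn \<xi> = 1"
  then have "Re (sip \<xi> z z) \<le> (N z)^2" using sip_le[of \<xi> z] by simp
  then have "sqrt (Re (sip \<xi> z z)) \<le> sqrt ((N z)^2)" by (rule real_sqrt_le_mono)
  then show ?thesis using N_nonneg[of z] sform.nn_def[OF sip_sform] by simp
qed

lemma N_attain:
  assumes "N z > 0" shows "\<exists>\<xi>. nn \<xi> = 1 \<and> Re (sip \<xi> z z) = (N z)^2"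
proof -
  have "op_norm ip (eip z z) > 0" using assms N_sq[of z] by (metis zero_less_power2 less_irrefl)
  then obtain \<xi> where "nn \<xi> = 1" "Re (ip (eip z z \<xi>) \<xi>) = op_norm ip (eip z z)"
    using attain[OF eip_cop[of z z] eip_adj[of z z] eip_re[of z]] by blast
  then show ?thesis unfolding sip_def N_sq by blast
qed

lemma N_attain_NN:
  assumes "N z > 0" shows "\<exists>\<xi>. nn \<xi> = 1 \<and> NN \<xi> z = N z"
proof -
  obtain \<xi> where "nn \<xi> = 1" "Re (sip \<xi> z z) = (N z)^2" using N_attain[OF assms] by blast
  then show ?thesis using sform.nn_def[OF sip_sform] N_nonneg[of z] by auto
qed

lemma N_tri:
  assumes "cmod l = 1" shows "N (x + esm l y) \<le> N x + N y"
proof (cases "N (x + esm l y) > 0")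
  case True
  then obtain \<xi> where x: "nn \<xi> = 1" "NN \<xi> (x + esm l y) = N (x + esm l y)"
    using N_attain_NN by blast
  have "NN \<xi> (x + esm l y) \<le> NN \<xi> x + NN \<xi> (esm l y)"
    by (rule sform.nn_triangle[OF sip_sform])
  also have "NN \<xi> (esm l y) = NN \<xi> y" using sform.nn_sc[OF sip_sform] assms by simp
  finally show ?thesis using NN_le[OF x(1), of x] NN_le[OF x(1), of y] x(2) by linarith
next
  case False
  then show ?thesis using N_nonneg[of x] N_nonneg[of y] by linarith
qed

lemma N_zero: "N z = 0 \<Longrightarrow> z = 0"
proof -
  assume "N z = 0"
  then have "op_norm ip (eip z z) = 0" using N_sq[of z] by simp
  then have "eip z z = (\<lambda>u. 0)" using op_norm_zero[OF eip_cop] by blast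
  then show "z = 0" by (rule eip_def0)
qed

lemma N_0[simp]: "N 0 = 0"
proof -
  have "op_norm ip (eip 0 0) \<le> 0" unfolding eip_00 by (rule op_norm_le) simp
  then have "(N 0)^2 = 0" using N_sq[of 0] op_norm_nonneg[OF eip_cop, of 0 0] by simp
  then show ?thesis by simp
qed

lemma bj_via:
  assumes "nn \<xi> = 1" "Re (sip \<xi> x x) = (N x)^2" "sip \<xi> w x = 0"
  shows "bj_orth N esm x w"
  unfolding bj_orth_def
proof
  fix a
  interpret F: sform esm "sip \<xi>" by (rule sip_sform)
  have "sip \<xi> x w = 0" using F.f_sym[of x w] assms(3) by simp
  then have "Re (sip \<xi> (x + esm a w) (x + esm a w)) \<ge> Re (sip \<xi> x x)"
    using F.f_expand_sc[of x a w] F.f_re[of w] by simp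
  then have "(N x)^2 \<le> (N (x + esm a w))^2"
    using sip_le[of \<xi> "x + esm a w"] assms by simp
  then show "N x \<le> N (x + esm a w)" using N_nonneg power2_le_imp_le by blast
qed

end


lemma re_cmod_eq:
  fixes z :: complex assumes "Re z \<ge> r" "cmod z \<le> r" shows "z = complex_of_real r"
proof -
  have "(Re z)^2 + (Im z)^2 = (cmod z)^2" by (simp add: cmod_def)
  moreover have "r \<ge> 0" using assms(2) norm_ge_zero order_trans by blast
  moreover have "Re z \<le> r" using assms(2) complex_Re_le_cmod order_trans by blast
  ultimately have "Re z = r" "(Im z)^2 \<le> 0" using assms
    by (smt (verit) power_mono norm_ge_zero zero_le_power2)+
  then show ?thesis by (simp add: complex_eq_iff)
qed

lemma unit_cnj: "cmod l = 1 \<Longrightarrow> l * cnj l = 1"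
  using mcnj1[of l] by simp

lemma unit_cnj2: "cmod l = 1 \<Longrightarrow> cnj l * l = 1"
  using mcnj2[of l] by simp

context hs begin

lemma eig:
  assumes T: "compact_op sm ip T" and n1: "nn \<xi> = 1"
    and q: "Re (ip (T \<xi>) \<xi>) = op_norm ip T"
  shows "T \<xi> = sm (complex_of_real (op_norm ip T)) \<xi>"
proof -
  define M where "M = op_norm ip T"
  have M0: "M \<ge> 0" unfolding M_def by (rule op_norm_nonneg[OF T])
  have nT: "nn (T \<xi>) \<le> M" using op_bound[OF T, of \<xi>] n1 M_def by simp
  have "(nn (T \<xi> - sm (complex_of_real M) \<xi>))^2 = Re (ip (T \<xi>) (T \<xi>)) - 2 * Re (ip (T \<xi>) (sm (complex_of_real M) \<xi>))
      + Re (ip (sm (complex_of_real M) \<xi>) (sm (complex_of_real M) \<xi>))"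
    by (simp add: nn_sq f_expand_diff)
  also have "Re (ip (T \<xi>) (sm (complex_of_real M) \<xi>)) = M * M"
    using q M_def by (simp add: f_sc2)
  also have "Re (ip (sm (complex_of_real M) \<xi>) (sm (complex_of_real M) \<xi>)) = M * M"
    using n1 nn_sc[of "complex_of_real M" \<xi>] M0 by (simp add: ip_uu power2_eq_square)
  also have "Re (ip (T \<xi>) (T \<xi>)) = (nn (T \<xi>))^2" by (simp add: nn_sq)
  finally have eq: "(nn (T \<xi> - sm (complex_of_real M) \<xi>))^2 = (nn (T \<xi>))^2 - 2 * (M * M) + M * M" .
  have "(nn (T \<xi>))^2 \<le> M^2" using nT nn_nonneg[of "T \<xi>"] by (rule power_mono)
  then have "(nn (T \<xi> - sm (complex_of_real M) \<xi>))^2 \<le> 0^2" using eq by (simp add: power2_eq_square)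
  then have "nn (T \<xi> - sm (complex_of_real M) \<xi>) \<le> 0" by (rule power2_le_imp_le) simp
  then have "nn (T \<xi> - sm (complex_of_real M) \<xi>) = 0" using nn_nonneg by (simp add: antisym)
  then show ?thesis using eq_if_nn0 M_def by blast
qed

end

context hm begin

lemma sip_act: "compact_op sm ip a \<Longrightarrow> sip \<xi> (act a x) y = ip (a (eip x y \<xi>)) \<xi>"
  by (simp add: sip_def eip_act)

lemma dir1:
  assumes l: "cmod l = 1" and par: "N (x + esm l y) = N x + N y"
  shows "\<exists>k. cmod k = 1 \<and>
       bj_orth N esm x
         (esm (complex_of_real (N y)) (act (eip x x) x) +
          esm k (esm (complex_of_real (N x)) (act (eip y x) x))) \<and>
       bj_orth N esm y
         (esm (complex_of_real (N x)) (act (eip y y) y) +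
          esm k (esm (complex_of_real (N y)) (act (eip y x) y)))"
proof -
  define t where "t = N x"
  define s where "s = N y"
  have t0: "t \<ge> 0" and s0: "s \<ge> 0" unfolding t_def s_def by (rule N_nonneg)+
  show ?thesis
  proof (cases "t + s = 0")
    case True
    then have "N x = 0" "N y = 0" using t0 s0 t_def s_def by auto
    then show ?thesis unfolding bj_orth_def using N_nonneg by (intro exI[of _ 1]) simp
  next
    case False
    define z where "z = x + esm l y"
    have Nz: "N z = t + s" using par z_def t_def s_def by simp
    then have "N z > 0" using False t0 s0 by simp
    then obtain \<xi> where n1: "nn \<xi> = 1" and zq: "Re (sip \<xi> z z) = (t + s)^2"
      using N_attain Nz by metis
    interpret F: sform esm "sip \<xi>" by (rule sip_sform)
    define a where "a = Re (sip \<xi> x x)"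
    define c where "c = Re (sip \<xi> y y)"
    have a_le: "a \<le> t^2" using sip_le[of \<xi> x] n1 a_def t_def by simp
    have c_le: "c \<le> s^2" using sip_le[of \<xi> y] n1 c_def s_def by simp
    have a0: "a \<ge> 0" using F.f_re a_def by simp
    have c0: "c \<ge> 0" using F.f_re c_def by simp
    have exp: "(t + s)^2 = a + 2 * Re (cnj l * sip \<xi> x y) + c"
      using F.f_expand_sc[of x l y] zq l unfolding z_def a_def c_def by simp
    have csb: "cmod (sip \<xi> x y) \<le> t * s"
    proof -
      have "cmod (sip \<xi> x y) \<le> F.nn x * F.nn y" by (rule F.cs)
      also have "\<dots> \<le> t * s" using NN_le[OF n1, of x] NN_le[OF n1, of y]
        unfolding t_def s_def by (intro mult_mono) (auto simp: N_nonneg F.nn_nonneg)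
      finally show ?thesis .
    qed
    have recs: "Re (cnj l * sip \<xi> x y) \<le> t * s"
      using csb complex_Re_le_cmod[of "cnj l * sip \<xi> x y"] l by (simp add: norm_mult)
    have exp2: "t^2 + 2 * (t * s) + s^2 = a + 2 * Re (cnj l * sip \<xi> x y) + c"
      using exp by (simp add: power2_sum)
    have at: "a = t^2" and cs': "c = s^2" and re: "Re (cnj l * sip \<xi> x y) = t * s"
      using exp2 a_le c_le recs by linarith+
    have "cnj l * sip \<xi> x y = complex_of_real (t * s)"
      by (rule re_cmod_eq) (use re csb l in \<open>auto simp: norm_mult\<close>)
    then have "l * (cnj l * sip \<xi> x y) = l * complex_of_real (t * s)" by simp
    then have fxy: "sip \<xi> x y = l * complex_of_real (t * s)"
      using unit_cnj[OF l] by (simp add: mult.assoc[symmetric])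
    have fyx: "sip \<xi> y x = cnj l * complex_of_real (t * s)"
      using F.f_sym[of y x] fxy by simp
    define p where "p = eip x x"
    define q where "q = eip y y"
    define b where "b = eip y x"
    have pcop: "compact_op sm ip p" and qcop: "compact_op sm ip q" and bcop: "compact_op sm ip b"
      unfolding p_def q_def b_def by (rule eip_cop)+
    have pxi: "p \<xi> = sm (complex_of_real (t^2)) \<xi>"
    proof -
      have "op_norm ip p = t^2" unfolding p_def t_def by (simp add: N_sq)
      moreover have "Re (ip (p \<xi>) \<xi>) = op_norm ip p" using at calculation a_def p_def sip_def by simp
      ultimately show ?thesis using eig[OF pcop n1] by simp
    qed
    have qxi: "q \<xi> = sm (complex_of_real (s^2)) \<xi>"
    proof -
      have "op_norm ip q = s^2" unfolding q_def s_def by (simp add: N_sq)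
      moreover have "Re (ip (q \<xi>) \<xi>) = op_norm ip q" using cs' calculation c_def q_def sip_def by simp
      ultimately show ?thesis using eig[OF qcop n1] by simp
    qed
    have ixi: "ip \<xi> \<xi> = 1" using ip_uu[of \<xi>] n1 by simp
    have bxi: "ip (b \<xi>) \<xi> = cnj l * complex_of_real (t * s)" using fyx unfolding b_def sip_def .
    have lc: "l * cnj l = 1" by (rule unit_cnj[OF l])
    have e1: "sip \<xi> (act p x) x = complex_of_real (t^4)"
      unfolding sip_act[OF pcop] p_def[symmetric] pxi cop_sm[OF pcop]
      by (simp add: f_sc ixi power4_eq_xxxx power2_eq_square)
    have e2: "sip \<xi> (act b x) x = complex_of_real (t^2) * (cnj l * complex_of_real (t * s))"
      unfolding sip_act[OF bcop] p_def[symmetric] pxi cop_sm[OF bcop]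
      by (simp add: f_sc bxi)
    have e3: "sip \<xi> (act q y) y = complex_of_real (s^4)"
      unfolding sip_act[OF qcop] q_def[symmetric] qxi cop_sm[OF qcop]
      by (simp add: f_sc ixi power4_eq_xxxx power2_eq_square)
    have e4: "sip \<xi> (act b y) y = complex_of_real (s^2) * (cnj l * complex_of_real (t * s))"
      unfolding sip_act[OF bcop] q_def[symmetric] qxi cop_sm[OF bcop]
      by (simp add: f_sc bxi)
    have w1: "sip \<xi> (esm (complex_of_real s) (act p x) + esm (- l) (esm (complex_of_real t) (act b x))) x = 0"
    proof -
      have "sip \<xi> (esm (complex_of_real s) (act p x) + esm (- l) (esm (complex_of_real t) (act b x))) x
        = complex_of_real s * complex_of_real (t^4) - (l * cnj l) * complex_of_real (t^4 * s)"
        by (simp add: F.f_add F.f_sc e1 e2 algebra_simps power2_eq_square power4_eq_xxxx)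
      then show ?thesis using lc by simp
    qed
    have w2: "sip \<xi> (esm (complex_of_real t) (act q y) + esm (- l) (esm (complex_of_real s) (act b y))) y = 0"
    proof -
      have "sip \<xi> (esm (complex_of_real t) (act q y) + esm (- l) (esm (complex_of_real s) (act b y))) y
        = complex_of_real t * complex_of_real (s^4) - (l * cnj l) * complex_of_real (s^4 * t)"
        by (simp add: F.f_add F.f_sc e3 e4 algebra_simps power2_eq_square power4_eq_xxxx)
      then show ?thesis using lc by simp
    qed
    have bx: "bj_orth N esm x (esm (complex_of_real s) (act p x) + esm (- l) (esm (complex_of_real t) (act b x)))"
      by (rule bj_via[OF n1 _ w1]) (use at a_def t_def in simp)
    have by': "bj_orth N esm y (esm (complex_of_real t) (act q y) + esm (- l) (esm (complex_of_real s) (act b y)))"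
      by (rule bj_via[OF n1 _ w2]) (use cs' c_def s_def in simp)
    show ?thesis using bx by' l unfolding p_def q_def b_def s_def t_def
      by (intro exI[of _ "- l"]) simp
  qed
qed

end


lemma disc_lemma:
  fixes c k :: complex and A :: real
  assumes "cmod c \<le> A" "cmod k = 1"
  shows "(cmod (complex_of_real A + k * c))^2 \<le> 2 * A * Re (complex_of_real A + k * c)"
    and "Re (complex_of_real A + k * c) \<ge> 0"
proof -
  define d where "d = k * c"
  have cd: "cmod d \<le> A" using assms by (simp add: d_def norm_mult)
  have "(cmod (complex_of_real A + d))^2 = (A + Re d)^2 + (Im d)^2" by (simp add: cmod_def)
  also have "\<dots> = A^2 + 2 * A * Re d + ((Re d)^2 + (Im d)^2)" by (simp add: power2_sum)
  also have "(Re d)^2 + (Im d)^2 = (cmod d)^2" by (simp add: cmod_def)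
  also have "(cmod d)^2 \<le> A^2" using cd norm_ge_zero by (rule power_mono)
  finally have "(cmod (complex_of_real A + d))^2 \<le> 2 * A * (A + Re d)" by (simp add: algebra_simps power2_eq_square)
  then show "(cmod (complex_of_real A + k * c))^2 \<le> 2 * A * Re (complex_of_real A + k * c)" by (simp add: d_def)
  have "- Re d \<le> cmod d" using abs_Re_le_cmod[of d] by linarith
  then show "Re (complex_of_real A + k * c) \<ge> 0" using cd by (simp add: d_def)
qed

context hs begin

lemma proj_ip:
  assumes sa: "\<And>u v. ip (T u) v = ip u (T v)" and idem: "\<And>u. T (T u) = T u"
  shows "ip (T u) u = complex_of_real ((nn (T u))^2)"
proof -
  have "ip (T u) u = ip (T (T u)) u" by (simp add: idem)
  also have "\<dots> = ip (T u) (T u)" by (simp add: sa)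
  finally show ?thesis by (simp add: ip_uu)
qed

lemma proj_norm:
  assumes T: "compact_op sm ip T" and sa: "\<And>u v. ip (T u) v = ip u (T v)" and idem: "\<And>u. T (T u) = T u"
    and pos: "\<And>u. Re (ip (T u) u) \<ge> 0" and Mp: "op_norm ip T > 0"
  shows "op_norm ip T = 1"
proof -
  have le: "op_norm ip T \<le> 1"
  proof (rule op_norm_le)
    fix u assume u1: "nn u \<le> 1"
    have "(nn (T u))^2 = Re (ip (T u) u)" using proj_ip[OF sa idem, of u] by simp
    also have "\<dots> \<le> cmod (ip (T u) u)" by (rule complex_Re_le_cmod)
    also have "\<dots> \<le> nn (T u) * nn u" by (rule ip_bound)
    finally have h: "nn (T u) * nn (T u) \<le> nn (T u) * nn u" by (simp add: power2_eq_square)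
    show "nn (T u) \<le> 1"
    proof (cases "nn (T u) = 0")
      case False
      then have "nn (T u) > 0" using nn_nonneg[of "T u"] by simp
      then have "nn (T u) \<le> nn u" using h by simp
      then show ?thesis using u1 by simp
    qed simp
  qed
  obtain \<xi> where x1: "nn \<xi> = 1" and xq: "Re (ip (T \<xi>) \<xi>) = op_norm ip T"
    using attain[OF T sa pos Mp] by blast
  have "op_norm ip T = (nn (T \<xi>))^2" using xq proj_ip[OF sa idem, of \<xi>] by simp
  also have "\<dots> \<le> (op_norm ip T * nn \<xi>)^2" using op_bound[OF T, of \<xi>] nn_nonneg by (simp add: power_mono)
  finally have "op_norm ip T \<le> op_norm ip T * op_norm ip T" using x1 by (simp add: power2_eq_square)
  then have "1 \<le> op_norm ip T" using Mp by simp
  then show ?thesis using le by simp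
qed

end

context hm begin

lemma NN_le_gen: "NN \<xi> z \<le> N z * nn \<xi>"
proof -
  have "Re (sip \<xi> z z) \<le> (N z * nn \<xi>)^2" using sip_le[of \<xi> z] by (simp add: power_mult_distrib)
  then have "sqrt (Re (sip \<xi> z z)) \<le> sqrt ((N z * nn \<xi>)^2)" by (rule real_sqrt_le_mono)
  then show ?thesis using N_nonneg[of z] nn_nonneg[of \<xi>] sform.nn_def[OF sip_sform] by simp
qed

end


context hm begin

lemma stepB:
  assumes idem: "\<And>u. eip x x (eip x x u) = eip x x u" and k: "cmod k = 1" and t1: "N x = 1"
    and n1: "nn \<xi> = 1" and r0: "r > 0"
    and big: "1 \<le> Re (sip \<xi> (x + esm (- complex_of_real r) w) (x + esm (- complex_of_real r) w))"
    and wdef: "w = esm (complex_of_real s) (act (eip x x) x) + esm k (act (eip y x) x)"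
    and sdef: "s = N y"
  shows "nn (eip x x \<xi>) \<le> 1 \<and>
    1 - (nn (eip x x \<xi>))^2 \<le> 2 * r * op_norm ip (eip y x) + r^2 * (N w)^2 \<and>
    (cmod (complex_of_real (s * (nn (eip x x \<xi>))^2) + k * ip (eip y x (eip x x \<xi>)) (eip x x \<xi>)))^2
      \<le> 2 * s * (r * (N w)^2 / 2 + op_norm ip (eip y x) * sqrt (2 * r * op_norm ip (eip y x) + r^2 * (N w)^2))"
proof -
  interpret F: sform esm "sip \<xi>" by (rule sip_sform)
  define p where "p = eip x x"
  define b where "b = eip y x"
  define B where "B = op_norm ip b"
  define K where "K = (N w)^2"
  define E where "E = 2 * r * B + r^2 * K"
  have pcop: "compact_op sm ip p" and bcop: "compact_op sm ip b"
    unfolding p_def b_def by (rule eip_cop)+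
  have sa: "\<And>u v. ip (p u) v = ip u (p v)" unfolding p_def by (rule eip_adj)
  have idem': "\<And>u. p (p u) = p u" using idem p_def by simp
  define \<eta> where "\<eta> = p \<xi>"
  have pn: "op_norm ip p = 1" using N_sq[of x] t1 p_def by simp
  have eta1: "nn \<eta> \<le> 1" using op_bound[OF pcop, of \<xi>] pn n1 \<eta>_def by simp
  have eta0: "nn \<eta> \<ge> 0" by (rule nn_nonneg)
  have etasq: "(nn \<eta>)^2 \<le> 1" using eta1 eta0 by (simp add: power_le_one)
  have B0: "B \<ge> 0" unfolding B_def by (rule op_norm_nonneg[OF bcop])
  have K0: "K \<ge> 0" unfolding K_def by simp
  have s0: "s \<ge> 0" using sdef N_nonneg by simp
  have fxx: "Re (sip \<xi> x x) = (nn \<eta>)^2"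
    using proj_ip[OF sa idem', of \<xi>] unfolding sip_def p_def[symmetric] \<eta>_def by simp
  have fwx: "sip \<xi> w x = complex_of_real (s * (nn \<eta>)^2) + k * ip (b \<eta>) \<xi>"
  proof -
    have a1: "sip \<xi> (act p x) x = complex_of_real ((nn \<eta>)^2)"
      unfolding sip_act[OF pcop] p_def[symmetric] idem' \<eta>_def using proj_ip[OF sa idem', of \<xi>] by simp
    have a2: "sip \<xi> (act b x) x = ip (b \<eta>) \<xi>"
      unfolding sip_act[OF bcop] p_def[symmetric] \<eta>_def ..
    show ?thesis unfolding wdef p_def[symmetric] b_def[symmetric]
      by (simp add: F.f_add F.f_sc a1 a2)
  qed
  define v where "v = sip \<xi> w x"
  have fww: "Re (sip \<xi> w w) \<le> K" using sip_le[of \<xi> w] n1 K_def by simp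
  have star: "1 \<le> (nn \<eta>)^2 - 2 * (r * Re v) + r^2 * K"
  proof -
    have e: "Re (sip \<xi> (x + esm (- complex_of_real r) w) (x + esm (- complex_of_real r) w))
      = Re (sip \<xi> x x) + 2 * Re (cnj (- complex_of_real r) * sip \<xi> x w) + (cmod (- complex_of_real r))^2 * Re (sip \<xi> w w)"
      by (rule F.f_expand_sc)
    have e1: "Re (sip \<xi> x w) = Re v" unfolding v_def using F.f_sym[of w x] by simp
    have e2: "Re (cnj (- complex_of_real r) * sip \<xi> x w) = - (r * Re v)"
      using e1 by simp
    have e3: "(cmod (- complex_of_real r))^2 = r^2" using r0 by simp
    have "r^2 * Re (sip \<xi> w w) \<le> r^2 * K" using fww by (simp add: mult_left_mono)
    moreover have "(cmod (- complex_of_real r))^2 * Re (sip \<xi> w w) = r^2 * Re (sip \<xi> w w)" using e3 by simp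
    ultimately show ?thesis using big e e2 fxx by linarith
  qed
  have cb: "cmod (ip (b \<eta>) \<xi>) \<le> B"
  proof -
    have "cmod (ip (b \<eta>) \<xi>) \<le> nn (b \<eta>) * nn \<xi>" by (rule ip_bound)
    also have "\<dots> \<le> B * nn \<eta>" using op_bound[OF bcop, of \<eta>] n1 B_def by simp
    also have "\<dots> \<le> B" using eta1 B0 by (simp add: mult_left_le)
    finally show ?thesis .
  qed
  have Rev_ge: "Re v \<ge> - B"
  proof -
    have "- Re (k * ip (b \<eta>) \<xi>) \<le> cmod (k * ip (b \<eta>) \<xi>)" using abs_Re_le_cmod[of "k * ip (b \<eta>) \<xi>"] by linarith
    then have "- Re (k * ip (b \<eta>) \<xi>) \<le> B" using cb k by (simp add: norm_mult)
    moreover have "s * (nn \<eta>)^2 \<ge> 0" using s0 by simp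
    ultimately show ?thesis unfolding v_def fwx by simp
  qed
  have Eb: "1 - (nn \<eta>)^2 \<le> E"
  proof -
    have "r * (- B) \<le> r * Re v" using Rev_ge r0 by (intro mult_left_mono) auto
    then have "- (r * Re v) \<le> r * B" by simp
    then show ?thesis using star unfolding E_def by linarith
  qed
  have Rev_le: "Re v \<le> r * K / 2"
  proof -
    have "2 * (r * Re v) \<le> r^2 * K" using star etasq by linarith
    then have "r * (2 * Re v) \<le> r * (r * K)" by (simp add: power2_eq_square algebra_simps)
    then have "2 * Re v \<le> r * K" using r0 by simp
    then show ?thesis by simp
  qed
  have dist: "(nn (\<xi> - \<eta>))^2 = 1 - (nn \<eta>)^2"
  proof -
    have "ip \<xi> \<eta> = ip (p \<xi>) \<xi>" unfolding \<eta>_def by (simp add: sa)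
    then have i1: "Re (ip \<xi> \<eta>) = (nn \<eta>)^2" using proj_ip[OF sa idem', of \<xi>] \<eta>_def by simp
    have i2: "Re (ip \<xi> \<xi>) = 1" using nn_sq[of \<xi>] n1 by simp
    show ?thesis using f_expand_diff[of \<xi> \<eta>] i1 i2 by (simp add: nn_sq)
  qed
  have E0: "E \<ge> 0" using Eb etasq by linarith
  have nd: "nn (\<eta> - \<xi>) \<le> sqrt E"
  proof -
    have "(nn (\<eta> - \<xi>))^2 \<le> E" using dist Eb nn_commute[of \<eta> \<xi>] by simp
    then have "sqrt ((nn (\<eta> - \<xi>))^2) \<le> sqrt E" by (rule real_sqrt_le_mono)
    then show ?thesis using nn_nonneg by simp
  qed
  have diffb: "cmod (ip (b \<eta>) \<eta> - ip (b \<eta>) \<xi>) \<le> B * sqrt E"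
  proof -
    have "cmod (ip (b \<eta>) \<eta> - ip (b \<eta>) \<xi>) = cmod (ip (b \<eta>) (\<eta> - \<xi>))" by (simp add: f_diff2)
    also have "\<dots> \<le> nn (b \<eta>) * nn (\<eta> - \<xi>)" by (rule ip_bound)
    also have "\<dots> \<le> B * sqrt E"
    proof (rule mult_mono)
      show "nn (b \<eta>) \<le> B" using op_bound[OF bcop, of \<eta>] eta1 B0 B_def
        by (meson mult_left_le order_trans)
    qed (use nd B0 nn_nonneg in auto)
    finally show ?thesis .
  qed
  define u where "u = complex_of_real (s * (nn \<eta>)^2) + k * ip (b \<eta>) \<eta>"
  have uv: "u = v + k * (ip (b \<eta>) \<eta> - ip (b \<eta>) \<xi>)"
    unfolding u_def v_def fwx by (simp add: algebra_simps)
  have Reu: "Re u \<le> r * K / 2 + B * sqrt E"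
  proof -
    have "Re (k * (ip (b \<eta>) \<eta> - ip (b \<eta>) \<xi>)) \<le> cmod (k * (ip (b \<eta>) \<eta> - ip (b \<eta>) \<xi>))"
      by (rule complex_Re_le_cmod)
    also have "\<dots> \<le> B * sqrt E" using diffb k by (simp add: norm_mult)
    finally show ?thesis using uv Rev_le by simp
  qed
  have cbe: "cmod (ip (b \<eta>) \<eta>) \<le> s * (nn \<eta>)^2"
  proof -
    interpret G: sform esm "sip \<eta>" by (rule sip_sform)
    have "cmod (ip (b \<eta>) \<eta>) = cmod (sip \<eta> y x)" unfolding sip_def b_def ..
    also have "\<dots> \<le> NN \<eta> y * NN \<eta> x" by (rule G.cs)
    also have "\<dots> \<le> (s * nn \<eta>) * (1 * nn \<eta>)"
      using NN_le_gen[of \<eta> y] NN_le_gen[of \<eta> x] sdef t1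
      by (intro mult_mono) (auto simp: G.nn_nonneg N_nonneg nn_nonneg)
    finally show ?thesis by (simp add: power2_eq_square mult.assoc)
  qed
  have D1: "(cmod u)^2 \<le> 2 * (s * (nn \<eta>)^2) * Re u" and D2: "Re u \<ge> 0"
    using disc_lemma[OF cbe k] unfolding u_def by auto
  have "2 * (s * (nn \<eta>)^2) * Re u \<le> 2 * s * Re u"
    using D2 s0 etasq by (simp add: mult_left_le mult_right_mono)
  also have "\<dots> \<le> 2 * s * (r * K / 2 + B * sqrt E)" using Reu s0 by (simp add: mult_left_mono)
  finally have "(cmod u)^2 \<le> 2 * s * (r * K / 2 + B * sqrt E)" using D1 by linarith
  then show ?thesis using eta1 Eb unfolding u_def E_def K_def B_def b_def p_def \<eta>_def by simp
qed

end


context hs begin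

lemma ulip:
  assumes bc: "compact_op sm ip b" and a1: "nn a \<le> 1" and c1: "nn c \<le> 1" and k: "cmod k = 1" and s0: "s \<ge> 0"
  shows "cmod ((complex_of_real (s * (nn a)^2) + k * ip (b a) a) - (complex_of_real (s * (nn c)^2) + k * ip (b c) c))
    \<le> (2 * s + 2 * op_norm ip b) * nn (a - c)"
proof -
  define B where "B = op_norm ip b"
  have B0: "B \<ge> 0" unfolding B_def by (rule op_norm_nonneg[OF bc])
  have d: "(complex_of_real (s * (nn a)^2) + k * ip (b a) a) - (complex_of_real (s * (nn c)^2) + k * ip (b c) c)
     = complex_of_real (s * ((nn a)^2 - (nn c)^2)) + k * (ip (b (a - c)) a + ip (b c) (a - c))"
    by (simp add: cop_diff[OF bc] f_diff1 f_diff2 algebra_simps)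
  have n1: "\<bar>(nn a)^2 - (nn c)^2\<bar> \<le> 2 * nn (a - c)"
  proof -
    have fa: "(nn a)^2 - (nn c)^2 = (nn a - nn c) * (nn a + nn c)" by (simp add: power2_eq_square algebra_simps)
    have "\<bar>(nn a)^2 - (nn c)^2\<bar> = \<bar>nn a - nn c\<bar> * \<bar>nn a + nn c\<bar>" unfolding fa by (rule abs_mult)
    also have "\<bar>nn a + nn c\<bar> = nn a + nn c" using nn_nonneg[of a] nn_nonneg[of c] by simp
    finally have "\<bar>(nn a)^2 - (nn c)^2\<bar> = \<bar>nn a - nn c\<bar> * (nn a + nn c)" .
    also have "\<dots> \<le> nn (a - c) * 2"
      using nn_rev_tri[of a c] a1 c1 nn_nonneg[of a] nn_nonneg[of c] by (intro mult_mono) auto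
    finally show ?thesis by simp
  qed
  have n2: "cmod (ip (b (a - c)) a + ip (b c) (a - c)) \<le> 2 * B * nn (a - c)"
  proof -
    have "cmod (ip (b (a - c)) a) \<le> nn (b (a - c)) * nn a" by (rule ip_bound)
    also have "\<dots> \<le> (B * nn (a - c)) * 1"
      using op_bound[OF bc, of "a - c"] a1 B_def nn_nonneg B0 by (intro mult_mono) auto
    finally have x1: "cmod (ip (b (a - c)) a) \<le> B * nn (a - c)" by simp
    have "cmod (ip (b c) (a - c)) \<le> nn (b c) * nn (a - c)" by (rule ip_bound)
    also have "\<dots> \<le> B * nn (a - c)"
    proof (rule mult_right_mono)
      have "nn (b c) \<le> B * nn c" using op_bound[OF bc, of c] B_def by simp
      also have "\<dots> \<le> B" using c1 B0 by (simp add: mult_left_le)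
      finally show "nn (b c) \<le> B" .
    qed (rule nn_nonneg)
    finally have x2: "cmod (ip (b c) (a - c)) \<le> B * nn (a - c)" .
    show ?thesis using norm_triangle_ineq[of "ip (b (a - c)) a" "ip (b c) (a - c)"] x1 x2 by simp
  qed
  have "cmod (complex_of_real (s * ((nn a)^2 - (nn c)^2)) + k * (ip (b (a - c)) a + ip (b c) (a - c)))
     \<le> cmod (complex_of_real (s * ((nn a)^2 - (nn c)^2))) + cmod (k * (ip (b (a - c)) a + ip (b c) (a - c)))"
    by (rule norm_triangle_ineq)
  also have "cmod (complex_of_real (s * ((nn a)^2 - (nn c)^2))) \<le> s * (2 * nn (a - c))"
  proof -
    have "cmod (complex_of_real (s * ((nn a)^2 - (nn c)^2))) = s * \<bar>(nn a)^2 - (nn c)^2\<bar>"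
      unfolding norm_of_real using s0 by (simp add: abs_mult)
    also have "\<dots> \<le> s * (2 * nn (a - c))" using n1 s0 by (rule mult_left_mono)
    finally show ?thesis .
  qed
  also have "cmod (k * (ip (b (a - c)) a + ip (b c) (a - c))) \<le> 2 * B * nn (a - c)"
    using n2 k by (simp add: norm_mult)
  finally show ?thesis unfolding d B_def by (simp add: algebra_simps)
qed

end

context hm begin

lemma stepE:
  assumes t1: "N x = 1" and s0: "N y > 0" and k: "cmod k = 1" and n1: "nn \<eta> = 1"
    and U0: "complex_of_real (N y) + k * ip (eip y x \<eta>) \<eta> = 0"
  shows "N (x + esm (- k) y) = N x + N y"
proof -
  interpret F: sform esm "sip \<eta>" by (rule sip_sform)
  define s where "s = N y"
  have sp: "s > 0" using s0 s_def by simp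
  have kf: "k * sip \<eta> y x = - complex_of_real s" using U0 unfolding sip_def s_def
    by (simp add: eq_neg_iff_add_eq_0 add.commute)
  have fxy: "cnj (- k) * sip \<eta> x y = complex_of_real s"
  proof -
    have "cnj (- k) * sip \<eta> x y = - cnj (k * sip \<eta> y x)" using F.f_sym[of x y] by simp
    then show ?thesis using kf by simp
  qed
  define a where "a = Re (sip \<eta> x x)"
  define c where "c = Re (sip \<eta> y y)"
  have a1: "a \<le> 1" using sip_le[of \<eta> x] t1 n1 a_def by simp
  have c1: "c \<le> s^2" using sip_le[of \<eta> y] n1 c_def s_def by simp
  have a0: "a \<ge> 0" using F.f_re a_def by simp
  have c0: "c \<ge> 0" using F.f_re c_def by simp
  have cm: "cmod (sip \<eta> x y) = s"
  proof -
    have "cmod (cnj (- k) * sip \<eta> x y) = s" using fxy sp by simp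
    then show ?thesis using k by (simp add: norm_mult)
  qed
  have "s \<le> F.nn x * F.nn y" using F.cs[of x y] cm by simp
  also have "F.nn x * F.nn y = sqrt (a * c)" unfolding F.nn_def a_def c_def by (simp add: real_sqrt_mult)
  finally have "s \<le> sqrt (a * c)" .
  then have "s^2 \<le> (sqrt (a * c))^2" by (rule power_mono) (use sp in simp)
  then have sac: "s^2 \<le> a * c" using a0 c0 by simp
  have cpos: "c > 0"
  proof (rule ccontr)
    assume "\<not> c > 0" then have "c = 0" using c0 by simp
    then show False using sac sp by simp
  qed
  have "c * 1 \<le> c * a"
  proof -
    have "s^2 \<ge> c" using c1 by simp
    then show ?thesis using sac by (simp add: mult.commute)
  qed
  then have "a \<ge> 1" using cpos by simp
  then have aa: "a = 1" using a1 by simp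
  then have cc: "c = s^2" using sac c1 by simp
  define z where "z = x + esm (- k) y"
  have "Re (sip \<eta> z z) = a + 2 * Re (cnj (- k) * sip \<eta> x y) + (cmod (- k))^2 * c"
    unfolding z_def a_def c_def by (rule F.f_expand_sc)
  also have "\<dots> = (1 + s)^2" using fxy aa cc k by (simp add: power2_sum)
  finally have "(1 + s)^2 \<le> (N z)^2" using sip_le[of \<eta> z] n1 by simp
  then have "1 + s \<le> N z" using N_nonneg[of z] by (rule power2_le_imp_le)
  moreover have "N z \<le> N x + N y" unfolding z_def by (rule N_tri) (use k in simp)
  ultimately show ?thesis using t1 s_def z_def by simp
qed

end


context hm begin

lemma dir2_main:
  assumes idem: "\<And>u. eip x x (eip x x u) = eip x x u" and k: "cmod k = 1" and t1: "N x = 1"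
    and s0: "N y > 0" and bj: "bj_orth N esm x w"
    and wdef: "w = esm (complex_of_real (N y)) (act (eip x x) x) + esm k (act (eip y x) x)"
  shows "N (x + esm (- k) y) = N x + N y"
proof -
  define s where "s = N y"
  define p where "p = eip x x"
  define b where "b = eip y x"
  define B where "B = op_norm ip b"
  define K where "K = (N w)^2"
  define e :: "nat \<Rightarrow> real" where "e n = inverse (real (Suc n))" for n
  define E where "E r = 2 * r * B + r^2 * K" for r
  define \<delta> where "\<delta> r = 2 * s * (r * K / 2 + B * sqrt (E r))" for r
  define U where "U \<eta> = complex_of_real (s * (nn \<eta>)^2) + k * ip (b \<eta>) \<eta>" for \<eta>
  have pcop: "compact_op sm ip p" and bcop: "compact_op sm ip b"
    unfolding p_def b_def by (rule eip_cop)+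
  have B0: "B \<ge> 0" unfolding B_def by (rule op_norm_nonneg[OF bcop])
  have K0: "K \<ge> 0" unfolding K_def by simp
  have sp: "s > 0" using s0 s_def by simp
  have e0: "e n > 0" for n unfolding e_def by simp
  have emono: "e (r n) \<le> e n" if "strict_mono r" for r n
    using seq_suble[OF that, of n] unfolding e_def by (simp add: field_simps)
  have elim: "e \<longlonglongrightarrow> 0" unfolding e_def by (rule einv_lim)
  have Emono: "E r \<le> E r'" if "0 \<le> r" "r \<le> r'" for r r'
  proof -
    have "r^2 \<le> r'^2" using that by (simp add: power_mono)
    then have "r^2 * K \<le> r'^2 * K" using K0 by (simp add: mult_right_mono)
    moreover have "r * B \<le> r' * B" using that B0 by (simp add: mult_right_mono)
    ultimately show ?thesis unfolding E_def by simp
  qed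
  have E0: "E r \<ge> 0" if "r \<ge> 0" for r unfolding E_def using that B0 K0 by simp
  have dmono: "\<delta> r \<le> \<delta> r'" if "0 \<le> r" "r \<le> r'" for r r'
  proof -
    have "sqrt (E r) \<le> sqrt (E r')" using Emono[OF that] by simp
    then have "B * sqrt (E r) \<le> B * sqrt (E r')" using B0 by (simp add: mult_left_mono)
    moreover have "r * K / 2 \<le> r' * K / 2" using that K0 by (simp add: mult_right_mono divide_right_mono)
    ultimately show ?thesis unfolding \<delta>_def using sp by (simp add: mult_left_mono)
  qed
  have Elim: "(\<lambda>n. E (e n)) \<longlonglongrightarrow> 0"
  proof -
    have "(\<lambda>n. 2 * e n * B + (e n)^2 * K) \<longlonglongrightarrow> 2 * 0 * B + 0^2 * K"
      by (intro tendsto_intros elim)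
    then show ?thesis unfolding E_def by simp
  qed
  have dlim: "(\<lambda>n. sqrt (\<delta> (e n))) \<longlonglongrightarrow> 0"
  proof -
    have "(\<lambda>n. sqrt (2 * s * (e n * K / 2 + B * sqrt (E (e n))))) \<longlonglongrightarrow> sqrt (2 * s * (0 * K / 2 + B * sqrt 0))"
      by (intro tendsto_intros elim Elim) simp
    then show ?thesis unfolding \<delta>_def by simp
  qed
  have "\<forall>n. \<exists>\<xi>. nn \<xi> = 1 \<and> 1 \<le> Re (sip \<xi> (x + esm (- complex_of_real (e n)) w) (x + esm (- complex_of_real (e n)) w))"
  proof
    fix n
    define z where "z = x + esm (- complex_of_real (e n)) w"
    have "N x \<le> N z" using bj unfolding bj_orth_def z_def by blast
    then have z1: "N z \<ge> 1" using t1 by simp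
    then obtain \<xi> where "nn \<xi> = 1" "Re (sip \<xi> z z) = (N z)^2" using N_attain by force
    moreover have "1 \<le> (N z)^2" using z1 by (simp add: one_le_power)
    ultimately show "\<exists>\<xi>. nn \<xi> = 1 \<and> 1 \<le> Re (sip \<xi> (x + esm (- complex_of_real (e n)) w) (x + esm (- complex_of_real (e n)) w))"
      unfolding z_def by auto
  qed
  then obtain \<Xi> where X1: "\<And>n. nn (\<Xi> n) = 1"
    and X2: "\<And>n. 1 \<le> Re (sip (\<Xi> n) (x + esm (- complex_of_real (e n)) w) (x + esm (- complex_of_real (e n)) w))"
    by metis
  have SB: "nn (p (\<Xi> n)) \<le> 1 \<and> 1 - (nn (p (\<Xi> n)))^2 \<le> E (e n) \<and> (cmod (U (p (\<Xi> n))))^2 \<le> \<delta> (e n)" for n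
    using stepB[OF idem k t1 X1[of n] e0[of n] X2[of n] wdef refl] unfolding E_def \<delta>_def U_def p_def b_def B_def K_def s_def
    by simp
  have X1': "\<And>n. nn (\<Xi> n) \<le> 1" using X1 by simp
  obtain \<phi> L where phi: "strict_mono \<phi>" and Llim: "(\<lambda>n. nn (p (\<Xi> (\<phi> n)) - L)) \<longlonglongrightarrow> 0"
  proof -
    have "\<exists>r L. strict_mono r \<and> (\<lambda>n. nn (p (\<Xi> (r n)) - L)) \<longlonglongrightarrow> 0"
      by (rule cop_seq[OF pcop]) (rule X1')
    then show ?thesis using that by blast
  qed
  define A where "A n = nn (p (\<Xi> (\<phi> n)) - L)" for n
  have Alim: "A \<longlonglongrightarrow> 0" using Llim unfolding A_def by simp
  have SB': "nn (p (\<Xi> (\<phi> n))) \<le> 1 \<and> 1 - (nn (p (\<Xi> (\<phi> n))))^2 \<le> E (e n) \<and> (cmod (U (p (\<Xi> (\<phi> n)))))^2 \<le> \<delta> (e n)" for n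
  proof -
    have "E (e (\<phi> n)) \<le> E (e n)" using Emono[OF less_imp_le[OF e0] emono[OF phi]] .
    moreover have "\<delta> (e (\<phi> n)) \<le> \<delta> (e n)" using dmono[OF less_imp_le[OF e0] emono[OF phi]] .
    ultimately show ?thesis using SB[of "\<phi> n"] by linarith
  qed
  have nL: "nn L = 1"
  proof -
    have "\<bar>nn L - 1\<bar> \<le> A n + E (e n)" for n
    proof -
      define a where "a = nn (p (\<Xi> (\<phi> n)))"
      have a1: "a \<le> 1" and a2: "1 - a^2 \<le> E (e n)" using SB'[of n] a_def by auto
      have a0: "a \<ge> 0" unfolding a_def by (rule nn_nonneg)
      have "a^2 \<le> a" using a0 a1 by (simp add: power2_eq_square mult_left_le)
      then have a3: "1 - a \<le> E (e n)" using a2 by linarith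
      have "\<bar>a - nn L\<bar> \<le> A n" unfolding a_def A_def by (rule nn_rev_tri)
      then show ?thesis using a1 a3 by linarith
    qed
    moreover have "(\<lambda>n. A n + E (e n)) \<longlonglongrightarrow> 0 + 0" by (intro tendsto_intros Alim Elim)
    ultimately have "\<bar>nn L - 1\<bar> \<le> 0" using lim0_le[of "\<lambda>n. A n + E (e n)" "\<bar>nn L - 1\<bar>"] by simp
    then show ?thesis by simp
  qed
  have UL: "U L = 0"
  proof -
    have "cmod (U L) \<le> sqrt (\<delta> (e n)) + (2 * s + 2 * B) * A n" for n
    proof -
      define a where "a = p (\<Xi> (\<phi> n))"
      have a1: "nn a \<le> 1" using SB'[of n] a_def by auto
      have "(cmod (U a))^2 \<le> \<delta> (e n)" using SB'[of n] a_def by auto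
      then have "sqrt ((cmod (U a))^2) \<le> sqrt (\<delta> (e n))" by (rule real_sqrt_le_mono)
      then have u1: "cmod (U a) \<le> sqrt (\<delta> (e n))" by simp
      have "cmod (U L - U a) \<le> (2 * s + 2 * B) * nn (L - a)"
        unfolding U_def B_def by (rule ulip[OF bcop]) (use nL a1 k sp in auto)
      also have "nn (L - a) = A n" unfolding A_def a_def by (rule nn_commute)
      finally have u2: "cmod (U L - U a) \<le> (2 * s + 2 * B) * A n" .
      have "cmod (U L) \<le> cmod (U a) + cmod (U L - U a)"
        using norm_triangle_ineq[of "U a" "U L - U a"] by simp
      then show ?thesis using u1 u2 by linarith
    qed
    moreover have "(\<lambda>n. sqrt (\<delta> (e n)) + (2 * s + 2 * B) * A n) \<longlonglongrightarrow> 0 + (2 * s + 2 * B) * 0"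
      by (intro tendsto_intros dlim Alim)
    ultimately have "cmod (U L) \<le> 0"
      using lim0_le[of "\<lambda>n. sqrt (\<delta> (e n)) + (2 * s + 2 * B) * A n" "cmod (U L)"] by simp
    then show ?thesis by simp
  qed
  have "complex_of_real (N y) + k * ip (eip y x L) L = 0"
    using UL nL unfolding U_def s_def b_def by simp
  then show ?thesis by (rule stepE[OF t1 s0 k nL])
qed

end

theorem corollary2p3:
  fixes sm :: "complex \<Rightarrow> 'h::ab_group_add \<Rightarrow> 'h" and ip :: "'h \<Rightarrow> 'h \<Rightarrow> complex"
    and esm :: "complex \<Rightarrow> 'e::ab_group_add \<Rightarrow> 'e" and act :: "('h \<Rightarrow> 'h) \<Rightarrow> 'e \<Rightarrow> 'e"
    and eip :: "'e \<Rightarrow> 'e \<Rightarrow> ('h \<Rightarrow> 'h)" and x y :: 'e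
  assumes "hilbert_KH_module sm ip esm act eip"
    and "eip x x \<circ> eip x x = eip x x"
  shows "norm_parallel (mnorm ip eip) esm x y \<longleftrightarrow>
    (\<exists>l. cmod l = 1 \<and>
       bj_orth (mnorm ip eip) esm x
         (esm (complex_of_real (mnorm ip eip y)) (act (eip x x) x) +
          esm l (esm (complex_of_real (mnorm ip eip x)) (act (eip y x) x))) \<and>
       bj_orth (mnorm ip eip) esm y
         (esm (complex_of_real (mnorm ip eip x)) (act (eip y y) y) +
          esm l (esm (complex_of_real (mnorm ip eip y)) (act (eip y x) y))))"
proof -
  interpret hm sm ip esm act eip by unfold_locales (rule assms(1))
  have idem: "\<And>u. eip x x (eip x x u) = eip x x u" using assms(2) by (metis comp_apply)
  show ?thesis
  proof
    assume "norm_parallel (mnorm ip eip) esm x y"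
    then obtain l where "cmod l = 1" "N (x + esm l y) = N x + N y" unfolding norm_parallel_def by blast
    then show "\<exists>l. cmod l = 1 \<and>
       bj_orth (mnorm ip eip) esm x
         (esm (complex_of_real (mnorm ip eip y)) (act (eip x x) x) +
          esm l (esm (complex_of_real (mnorm ip eip x)) (act (eip y x) x))) \<and>
       bj_orth (mnorm ip eip) esm y
         (esm (complex_of_real (mnorm ip eip x)) (act (eip y y) y) +
          esm l (esm (complex_of_real (mnorm ip eip y)) (act (eip y x) y)))" by (rule dir1)
  next
    assume "\<exists>l. cmod l = 1 \<and>
       bj_orth (mnorm ip eip) esm x
         (esm (complex_of_real (mnorm ip eip y)) (act (eip x x) x) +
          esm l (esm (complex_of_real (mnorm ip eip x)) (act (eip y x) x))) \<and>
       bj_orth (mnorm ip eip) esm y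
         (esm (complex_of_real (mnorm ip eip x)) (act (eip y y) y) +
          esm l (esm (complex_of_real (mnorm ip eip y)) (act (eip y x) y)))"
    then obtain k where k: "cmod k = 1" and bjx: "bj_orth N esm x
         (esm (complex_of_real (N y)) (act (eip x x) x) +
          esm k (esm (complex_of_real (N x)) (act (eip y x) x)))" by blast
    show "norm_parallel (mnorm ip eip) esm x y"
      unfolding norm_parallel_def
    proof (cases "N x = 0 \<or> N y = 0")
      case True
      then show "\<exists>l. cmod l = 1 \<and> N (x + esm l y) = N x + N y"
      proof
        assume "N x = 0" then have "x = 0" by (rule N_zero)
        then show ?thesis by (intro exI[of _ 1]) simp
      next
        assume "N y = 0" then have "y = 0" by (rule N_zero)
        then show ?thesis by (intro exI[of _ 1]) simp
      qed
    next
      case False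
      then have tp: "N x > 0" and s0: "N y > 0" using N_nonneg[of x] N_nonneg[of y] by auto
      have "op_norm ip (eip x x) > 0" using tp N_sq[of x] by (metis zero_less_power2 less_irrefl)
      then have "op_norm ip (eip x x) = 1"
        by (rule proj_norm[OF eip_cop eip_adj idem eip_re])
      then have t1: "N x = 1" using N_sq[of x] N_nonneg[of x] by (simp add: power2_eq_1_iff)
      have bj': "bj_orth N esm x (esm (complex_of_real (N y)) (act (eip x x) x) + esm k (act (eip y x) x))"
        using bjx t1 by simp
      have "N (x + esm (- k) y) = N x + N y" by (rule dir2_main[OF idem k t1 s0 bj' refl])
      then show "\<exists>l. cmod l = 1 \<and> N (x + esm l y) = N x + N y" using k by (intro exI[of _ "- k"]) simp
    qed
  qed
qed

end
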